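(* Let $\mathbb K$ be a field with $2\in\mathbb K^\times$, $A$ a unital commutative associative $\mathbb K$-algebra, $\mathfrak k$ a $\mathbb K$-Lie algebra and $\mathfrak g=A\otimes\mathfrak k$. Then: (1) $\Lambda^2(A)\otimes\mathfrak k.S^2(\mathfrak k)+T_0(A)\otimes(\mathfrak k\vee\mathfrak k')\subseteq B_2(\mathfrak g)$ and $p_1(B_2(\mathfrak g))=\Lambda^2(A)\otimes\mathfrak k.S^2(\mathfrak k)+T(A)\otimes(\mathfrak k\vee\mathfrak k')$; (2) $p_2(B_2(\mathfrak g))=A\otimes B_2(\mathfrak k)$; (3) $I_A\otimes(\mathfrak k\wedge\mathfrak k')=p_3(B_2(\mathfrak g))\subseteq B_2(\mathfrak g)$.
   Context: $\mathfrak g$ has bracket $[a\otimes x,a'\otimes x']=aa'\otimes[x,x']$, $ax=a\otimes x$, unit $\mathbf 1$, $\mathfrak k'=[\mathfrak k,\mathfrak k]$. $v\wedge w=\tfrac12(v\otimes w-w\otimes v)$, $v\vee w=\tfrac12(v\otimes w+w\otimes v)$. For a Lie algebra $\mathfrak h$, $B_2(\mathfrak h)$ is the image of $\partial:\Lambda^3(\mathfrak h)\to\Lambda^2(\mathfrak h)$, $u\wedge v\wedge w\mapsto[u,v]\wedge w+[v,w]\wedge u+[w,u]\wedge v$. $I_A$ is the kernel of multiplication $S^2(A)\to A$. Subspaces of $\Lambda^2(\mathfrak g)$: $\Lambda^2(A)\otimes S^2(\mathfrak k)$ via $a\wedge b\otimes x\vee y\mapsto\tfrac12(ax\wedge by+ay\wedge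 bx)$, $A\otimes\Lambda^2(\mathfrak k)$ via $a\otimes x\wedge y\mapsto\tfrac12(ax\wedge\mathbf 1y-ay\wedge\mathbf 1x)$, $I_A\otimes\Lambda^2(\mathfrak k)$ via $a\vee b\otimes x\wedge y\mapsto\tfrac12(ax\wedge by-ay\wedge bx)$; $\Lambda^2(\mathfrak g)$ is their direct sum with projections $p_1(ax\wedge by)=a\wedge b\otimes x\vee y$, $p_2(ax\wedge by)=ab\otimes x\wedge y$, $p_3(ax\wedge by)=(a\vee b-ab\vee\mathbf 1)\otimes x\wedge y$. $\mathfrak k.S^2(\mathfrak k)$ is the span of $[z,x]\vee y+x\vee[z,y]$; $\mathfrak k\vee\mathfrak k'$ the span of $x\vee y$, and $\mathfrak k\wedge\mathfrak k'$ the span of $x\wedge y$, with $x\in\mathfrak k$, $y\in\mathfrak k'$. $T(A)$ is the span of $ab\wedge c+bc\wedge a+ca\wedge b$, and $T_0(A)$ the span of $ab\wedge c+bc\wedge a+ca\wedge b-abc\wedge\mathbf 1$ ($a,b,c\in A$). *)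

theory Defs
  imports Complex_Main "HOL-Library.Function_Algebras"
begin

text \<open>A vector space on a type 'v is given by a
scalar multiplication s with Vector_Spaces.vector_space s.  The tensor product V (x) W
is modelled concretely inside the space of functions on pairs of linear functionals:
v (x) w is the bilinear form (phi,psi) mapsto phi v * psi w on V* x W*.  Over a field this
realises V (x) W faithfully (the canonical map V (x) W -> Bil(V*,W*) is injective).\<close>

definition fscale :: "'f::field \<Rightarrow> ('x \<Rightarrow> 'f) \<Rightarrow> ('x \<Rightarrow> 'f)" where
  "fscale c f = (\<lambda>x. c * f x)"

definition fspan :: "('x \<Rightarrow> 'f::field) set \<Rightarrow> ('x \<Rightarrow> 'f) set" where
  "fspan S = module.span fscale S"

type_synonym ('v, 'w, 'f) tens = "('v \<Rightarrow> 'f) \<times> ('w \<Rightarrow> 'f) \<Rightarrow> 'f"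

definition tp :: "('f::field \<Rightarrow> 'v::ab_group_add \<Rightarrow> 'v) \<Rightarrow> ('f \<Rightarrow> 'w::ab_group_add \<Rightarrow> 'w)
    \<Rightarrow> 'v \<Rightarrow> 'w \<Rightarrow> ('v, 'w, 'f) tens" where
  "tp s1 s2 v w = (\<lambda>(\<phi>, \<psi>). if Vector_Spaces.linear s1 (*) \<phi> \<and> Vector_Spaces.linear s2 (*) \<psi>
                               then \<phi> v * \<psi> w else 0)"

definition tsp :: "('f::field \<Rightarrow> 'v::ab_group_add \<Rightarrow> 'v) \<Rightarrow> ('f \<Rightarrow> 'w::ab_group_add \<Rightarrow> 'w)
    \<Rightarrow> 'v set \<Rightarrow> 'w set \<Rightarrow> ('v, 'w, 'f) tens set" where
  "tsp s1 s2 U W = fspan {tp s1 s2 u w | u w. u \<in> U \<and> w \<in> W}"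

definition wedge2 :: "('f::field \<Rightarrow> 'v::ab_group_add \<Rightarrow> 'v) \<Rightarrow> 'v \<Rightarrow> 'v \<Rightarrow> ('v, 'v, 'f) tens" where
  "wedge2 s v w = fscale (1/2) (tp s s v w - tp s s w v)"

definition vee2 :: "('f::field \<Rightarrow> 'v::ab_group_add \<Rightarrow> 'v) \<Rightarrow> 'v \<Rightarrow> 'v \<Rightarrow> ('v, 'v, 'f) tens" where
  "vee2 s v w = fscale (1/2) (tp s s v w + tp s s w v)"

definition Lam2 :: "('f::field \<Rightarrow> 'v::ab_group_add \<Rightarrow> 'v) \<Rightarrow> 'v set \<Rightarrow> ('v, 'v, 'f) tens set" where
  "Lam2 s H = fspan {wedge2 s u v | u v. u \<in> H \<and> v \<in> H}"

definition Sym2 :: "('f::field \<Rightarrow> 'v::ab_group_add \<Rightarrow> 'v) \<Rightarrow> 'v set \<Rightarrow> ('v, 'v, 'f) tens set" where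
  "Sym2 s H = fspan {vee2 s u v | u v. u \<in> H \<and> v \<in> H}"

text \<open>Triple tensors and u wedge v wedge w realised by the (unnormalised) antisymmetriser,
which embeds Lambda^3 into the third tensor power in every characteristic.\<close>
definition tp3 :: "('f::field \<Rightarrow> 'v::ab_group_add \<Rightarrow> 'v) \<Rightarrow> 'v \<Rightarrow> 'v \<Rightarrow> 'v
    \<Rightarrow> (('v, 'v, 'f) tens, 'v, 'f) tens" where
  "tp3 s u v w = tp fscale s (tp s s u v) w"

definition wedge3 :: "('f::field \<Rightarrow> 'v::ab_group_add \<Rightarrow> 'v) \<Rightarrow> 'v \<Rightarrow> 'v \<Rightarrow> 'v
    \<Rightarrow> (('v, 'v, 'f) tens, 'v, 'f) tens" where
  "wedge3 s u v w = tp3 s u v w - tp3 s v u w + tp3 s v w u - tp3 s w v u + tp3 s w u v - tp3 s u w v"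

definition Lam3 :: "('f::field \<Rightarrow> 'v::ab_group_add \<Rightarrow> 'v) \<Rightarrow> 'v set
    \<Rightarrow> (('v, 'v, 'f) tens, 'v, 'f) tens set" where
  "Lam3 s H = fspan {wedge3 s u v w | u v w. u \<in> H \<and> v \<in> H \<and> w \<in> H}"

definition bdry :: "('f::field \<Rightarrow> 'v::ab_group_add \<Rightarrow> 'v) \<Rightarrow> ('v \<Rightarrow> 'v \<Rightarrow> 'v) \<Rightarrow> 'v set
    \<Rightarrow> (('v, 'v, 'f) tens, 'v, 'f) tens \<Rightarrow> ('v, 'v, 'f) tens" where
  "bdry s b H = (SOME D. Vector_Spaces.linear fscale fscale D \<and>
      (\<forall>u\<in>H. \<forall>v\<in>H. \<forall>w\<in>H. D (wedge3 s u v w) =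
          wedge2 s (b u v) w + wedge2 s (b v w) u + wedge2 s (b w u) v))"

definition B2 :: "('f::field \<Rightarrow> 'v::ab_group_add \<Rightarrow> 'v) \<Rightarrow> ('v \<Rightarrow> 'v \<Rightarrow> 'v) \<Rightarrow> 'v set
    \<Rightarrow> ('v, 'v, 'f) tens set" where
  "B2 s b H = bdry s b H ` Lam3 s H"

abbreviation gel :: "('f::field \<Rightarrow> 'a::comm_ring_1 \<Rightarrow> 'a) \<Rightarrow> ('f \<Rightarrow> 'k::ab_group_add \<Rightarrow> 'k)
    \<Rightarrow> 'a \<Rightarrow> 'k \<Rightarrow> ('a, 'k, 'f) tens" where
  "gel sa sk a x \<equiv> tp sa sk a x"

definition gsp :: "('f::field \<Rightarrow> 'a::comm_ring_1 \<Rightarrow> 'a) \<Rightarrow> ('f \<Rightarrow> 'k::ab_group_add \<Rightarrow> 'k)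
    \<Rightarrow> ('a, 'k, 'f) tens set" where
  "gsp sa sk = tsp sa sk UNIV UNIV"

definition gbr :: "('f::field \<Rightarrow> 'a::comm_ring_1 \<Rightarrow> 'a) \<Rightarrow> ('f \<Rightarrow> 'k::ab_group_add \<Rightarrow> 'k)
    \<Rightarrow> ('k \<Rightarrow> 'k \<Rightarrow> 'k) \<Rightarrow> ('a, 'k, 'f) tens \<Rightarrow> ('a, 'k, 'f) tens \<Rightarrow> ('a, 'k, 'f) tens" where
  "gbr sa sk br = (SOME B. (\<forall>u. Vector_Spaces.linear fscale fscale (B u)) \<and>
      (\<forall>v. Vector_Spaces.linear fscale fscale (\<lambda>u. B u v)) \<and>
      (\<forall>a x a' x'. B (gel sa sk a x) (gel sa sk a' x') = gel sa sk (a * a') (br x x')))"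

definition B2g where
  "B2g sa sk br = B2 fscale (gbr sa sk br) (gsp sa sk)"

definition p1 :: "('f::field \<Rightarrow> 'a::comm_ring_1 \<Rightarrow> 'a) \<Rightarrow> ('f \<Rightarrow> 'k::ab_group_add \<Rightarrow> 'k)
    \<Rightarrow> (('a, 'k, 'f) tens, ('a, 'k, 'f) tens, 'f) tens
    \<Rightarrow> (('a, 'a, 'f) tens, ('k, 'k, 'f) tens, 'f) tens" where
  "p1 sa sk = (SOME L. Vector_Spaces.linear fscale fscale L \<and>
     (\<forall>a b x y. L (wedge2 fscale (gel sa sk a x) (gel sa sk b y)) =
                tp fscale fscale (wedge2 sa a b) (vee2 sk x y)))"

definition p2 :: "('f::field \<Rightarrow> 'a::comm_ring_1 \<Rightarrow> 'a) \<Rightarrow> ('f \<Rightarrow> 'k::ab_group_add \<Rightarrow> 'k)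
    \<Rightarrow> (('a, 'k, 'f) tens, ('a, 'k, 'f) tens, 'f) tens
    \<Rightarrow> ('a, ('k, 'k, 'f) tens, 'f) tens" where
  "p2 sa sk = (SOME L. Vector_Spaces.linear fscale fscale L \<and>
     (\<forall>a b x y. L (wedge2 fscale (gel sa sk a x) (gel sa sk b y)) =
                tp sa fscale (a * b) (wedge2 sk x y)))"

definition p3 :: "('f::field \<Rightarrow> 'a::comm_ring_1 \<Rightarrow> 'a) \<Rightarrow> ('f \<Rightarrow> 'k::ab_group_add \<Rightarrow> 'k)
    \<Rightarrow> (('a, 'k, 'f) tens, ('a, 'k, 'f) tens, 'f) tens
    \<Rightarrow> (('a, 'a, 'f) tens, ('k, 'k, 'f) tens, 'f) tens" where
  "p3 sa sk = (SOME L. Vector_Spaces.linear fscale fscale L \<and>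
     (\<forall>a b x y. L (wedge2 fscale (gel sa sk a x) (gel sa sk b y)) =
                tp fscale fscale (vee2 sa a b - vee2 sa (a * b) 1) (wedge2 sk x y)))"

definition emb1 :: "('f::field \<Rightarrow> 'a::comm_ring_1 \<Rightarrow> 'a) \<Rightarrow> ('f \<Rightarrow> 'k::ab_group_add \<Rightarrow> 'k)
    \<Rightarrow> (('a, 'a, 'f) tens, ('k, 'k, 'f) tens, 'f) tens
    \<Rightarrow> (('a, 'k, 'f) tens, ('a, 'k, 'f) tens, 'f) tens" where
  "emb1 sa sk = (SOME L. Vector_Spaces.linear fscale fscale L \<and>
     (\<forall>a b x y. L (tp fscale fscale (wedge2 sa a b) (vee2 sk x y)) =
        fscale (1/2) (wedge2 fscale (gel sa sk a x) (gel sa sk b y)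
                    + wedge2 fscale (gel sa sk a y) (gel sa sk b x))))"

definition emb3 :: "('f::field \<Rightarrow> 'a::comm_ring_1 \<Rightarrow> 'a) \<Rightarrow> ('f \<Rightarrow> 'k::ab_group_add \<Rightarrow> 'k)
    \<Rightarrow> (('a, 'a, 'f) tens, ('k, 'k, 'f) tens, 'f) tens
    \<Rightarrow> (('a, 'k, 'f) tens, ('a, 'k, 'f) tens, 'f) tens" where
  "emb3 sa sk = (SOME L. Vector_Spaces.linear fscale fscale L \<and>
     (\<forall>a b x y. L (tp fscale fscale (vee2 sa a b) (wedge2 sk x y)) =
        fscale (1/2) (wedge2 fscale (gel sa sk a x) (gel sa sk b y)
                    - wedge2 fscale (gel sa sk a y) (gel sa sk b x))))"

definition ssum :: "'v::ab_group_add set \<Rightarrow> 'v set \<Rightarrow> 'v set" where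
  "ssum U W = {u + w | u w. u \<in> U \<and> w \<in> W}"

definition kder :: "('f::field \<Rightarrow> 'k::ab_group_add \<Rightarrow> 'k) \<Rightarrow> ('k \<Rightarrow> 'k \<Rightarrow> 'k) \<Rightarrow> 'k set" where
  "kder sk br = module.span sk {br x y | x y. True}"

definition kS2 :: "('f::field \<Rightarrow> 'k::ab_group_add \<Rightarrow> 'k) \<Rightarrow> ('k \<Rightarrow> 'k \<Rightarrow> 'k) \<Rightarrow> ('k, 'k, 'f) tens set" where
  "kS2 sk br = fspan {vee2 sk (br z x) y + vee2 sk x (br z y) | x y z. True}"

definition kveek' :: "('f::field \<Rightarrow> 'k::ab_group_add \<Rightarrow> 'k) \<Rightarrow> ('k \<Rightarrow> 'k \<Rightarrow> 'k) \<Rightarrow> ('k, 'k, 'f) tens set" where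
  "kveek' sk br = fspan {vee2 sk x y | x y. y \<in> kder sk br}"

definition kwedgek' :: "('f::field \<Rightarrow> 'k::ab_group_add \<Rightarrow> 'k) \<Rightarrow> ('k \<Rightarrow> 'k \<Rightarrow> 'k) \<Rightarrow> ('k, 'k, 'f) tens set" where
  "kwedgek' sk br = fspan {wedge2 sk x y | x y. y \<in> kder sk br}"

definition TA :: "('f::field \<Rightarrow> 'a::comm_ring_1 \<Rightarrow> 'a) \<Rightarrow> ('a, 'a, 'f) tens set" where
  "TA sa = fspan {wedge2 sa (a * b) c + wedge2 sa (b * c) a + wedge2 sa (c * a) b | a b c. True}"

definition T0A :: "('f::field \<Rightarrow> 'a::comm_ring_1 \<Rightarrow> 'a) \<Rightarrow> ('a, 'a, 'f) tens set" where
  "T0A sa = fspan {wedge2 sa (a * b) c + wedge2 sa (b * c) a + wedge2 sa (c * a) b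
                   - wedge2 sa (a * b * c) 1 | a b c. True}"

definition multA :: "('f::field \<Rightarrow> 'a::comm_ring_1 \<Rightarrow> 'a) \<Rightarrow> ('a, 'a, 'f) tens \<Rightarrow> 'a" where
  "multA sa = (SOME L. Vector_Spaces.linear fscale sa L \<and> (\<forall>a b. L (tp sa sa a b) = a * b))"

definition IA :: "('f::field \<Rightarrow> 'a::comm_ring_1 \<Rightarrow> 'a) \<Rightarrow> ('a, 'a, 'f) tens set" where
  "IA sa = {t \<in> Sym2 sa UNIV. multA sa t = 0}"

end

theory Submission
  imports Defs
begin

lemma vs_fscale: "Vector_Spaces.vector_space (fscale :: 'f::field \<Rightarrow> ('x \<Rightarrow> 'f) \<Rightarrow> _)"
  by (unfold_locales) (auto simp: fscale_def fun_eq_iff algebra_simps)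

lemma vs_mult: "Vector_Spaces.vector_space ((*) :: 'f::field \<Rightarrow> 'f \<Rightarrow> 'f)"
  by (unfold_locales) (auto simp: algebra_simps)

lemma mod_fscale: "module (fscale :: 'f::field \<Rightarrow> ('x \<Rightarrow> 'f) \<Rightarrow> _)"
  using vs_fscale module_iff_vector_space by blast

lemma fscale_apply[simp]: "fscale c f x = c * f x"
  by (simp add: fscale_def)

lemma fun_sum_apply: "(\<Sum>i\<in>A. f i) x = (\<Sum>i\<in>A. f i x)"
  by (induct A rule: infinite_finite_induct) auto

lemma fscale_add: "fscale c (f + g) = fscale c f + fscale c g"
  by (simp add: fun_eq_iff algebra_simps)
lemma fscale_diff: "fscale c (f - g) = fscale c f - fscale c g"
  by (simp add: fun_eq_iff algebra_simps)
lemma fscale_minus: "fscale c (- g) = - fscale c g"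
  by (simp add: fun_eq_iff algebra_simps)
lemma fscale_fscale: "fscale c (fscale d g) = fscale (c*d) g"
  by (simp add: fun_eq_iff algebra_simps)

lemma lin_add: "Vector_Spaces.linear s1 s2 f \<Longrightarrow> f (x + y) = f x + f y"
  by (simp add: Vector_Spaces.linear_iff)
lemma lin_scale: "Vector_Spaces.linear s1 s2 f \<Longrightarrow> f (s1 c x) = s2 c (f x)"
  by (simp add: Vector_Spaces.linear_iff)
lemma lin_zero: "Vector_Spaces.linear s1 s2 f \<Longrightarrow> f 0 = 0"
  by (metis add_cancel_right_right lin_add)
lemma lin_minus: "Vector_Spaces.linear s1 s2 f \<Longrightarrow> f (- x) = - f x"
  by (metis add.right_inverse add_eq_0_iff lin_add lin_zero)
lemma lin_diff: "Vector_Spaces.linear s1 s2 f \<Longrightarrow> f (x - y) = f x - f y"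
  by (metis diff_conv_add_uminus lin_add lin_minus)

lemma linI: "Vector_Spaces.vector_space s1 \<Longrightarrow> Vector_Spaces.vector_space s2 \<Longrightarrow>
   (\<And>x y. f (x + y) = f x + f y) \<Longrightarrow> (\<And>c x. f (s1 c x) = s2 c (f x)) \<Longrightarrow> Vector_Spaces.linear s1 s2 f"
  by (simp add: Vector_Spaces.linear_iff)

lemma tp_add1: "tp s1 s2 (u + u') v = tp s1 s2 u v + tp s1 s2 u' v"
  by (auto simp: fun_eq_iff tp_def lin_add[where x=u and y=u'] algebra_simps)
lemma tp_add2: "tp s1 s2 u (v + v') = tp s1 s2 u v + tp s1 s2 u v'"
  by (auto simp: fun_eq_iff tp_def lin_add[where x=v and y=v'] algebra_simps)
lemma tp_scale1: "tp s1 s2 (s1 c u) v = fscale c (tp s1 s2 u v)"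
  by (auto simp: fun_eq_iff tp_def lin_scale[where x=u and c=c] algebra_simps)
lemma tp_scale2: "tp s1 s2 u (s2 c v) = fscale c (tp s1 s2 u v)"
  by (auto simp: fun_eq_iff tp_def lin_scale[where x=v and c=c] algebra_simps)
lemma tp_minus1: "tp s1 s2 (- u) v = - tp s1 s2 u v"
  by (auto simp: fun_eq_iff tp_def lin_minus[where x=u] algebra_simps)
lemma tp_minus2: "tp s1 s2 u (- v) = - tp s1 s2 u v"
  by (auto simp: fun_eq_iff tp_def lin_minus[where x=v] algebra_simps)
lemma tp_diff1: "tp s1 s2 (u - u') v = tp s1 s2 u v - tp s1 s2 u' v"
  by (auto simp: fun_eq_iff tp_def lin_diff[where x=u and y=u'] algebra_simps)
lemma tp_diff2: "tp s1 s2 u (v - v') = tp s1 s2 u v - tp s1 s2 u v'"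
  by (auto simp: fun_eq_iff tp_def lin_diff[where x=v and y=v'] algebra_simps)
lemma tp_zero1: "tp s1 s2 0 v = 0"
  by (auto simp: fun_eq_iff tp_def lin_zero)
lemma tp_zero2: "tp s1 s2 u 0 = 0"
  by (auto simp: fun_eq_iff tp_def lin_zero)

lemmas tp_lin = tp_add1 tp_add2 tp_scale1 tp_scale2 tp_minus1 tp_minus2 tp_diff1 tp_diff2 tp_zero1 tp_zero2

lemma linear_tp1: "Vector_Spaces.vector_space s1 \<Longrightarrow> Vector_Spaces.linear s1 fscale (\<lambda>u. tp s1 s2 u v)"
  by (rule linI) (auto simp: vs_fscale tp_add1 tp_scale1)
lemma linear_tp2: "Vector_Spaces.vector_space s2 \<Longrightarrow> Vector_Spaces.linear s2 fscale (tp s1 s2 u)"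
  by (rule linI) (auto simp: vs_fscale tp_add2 tp_scale2)

lemma tp_apply: "Vector_Spaces.linear s1 (*) \<phi> \<Longrightarrow> Vector_Spaces.linear s2 (*) \<psi> \<Longrightarrow>
   tp s1 s2 v w (\<phi>, \<psi>) = \<phi> v * \<psi> w"
  by (simp add: tp_def)

section \<open>Coordinate functionals and independence\<close>

lemma coord_fun:
  assumes vs: "Vector_Spaces.vector_space s" and ind: "\<not> module.dependent s X" and x0: "x0 \<in> X"
  shows "\<exists>\<phi>. Vector_Spaces.linear s (*) \<phi> \<and> \<phi> x0 = 1 \<and> (\<forall>x\<in>X. x \<noteq> x0 \<longrightarrow> \<phi> x = 0)"
proof -
  interpret p: vector_space_pair s "(*) :: 'a \<Rightarrow> 'a \<Rightarrow> 'a"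
    using vs vs_mult by (simp add: vector_space_pair_def)
  from p.linear_independent_extend[OF ind, of "\<lambda>x. if x = x0 then 1 else 0"]
  obtain g where "Vector_Spaces.linear s (*) g" "\<forall>x\<in>X. g x = (if x = x0 then 1 else 0)" by blast
  then show ?thesis using x0 by (intro exI[of _ g]) auto
qed

lemma tp_indep:
  assumes vs1: "Vector_Spaces.vector_space s1" and vs2: "Vector_Spaces.vector_space s2"
    and iX: "\<not> module.dependent s1 X" and iY: "\<not> module.dependent s2 Y"
  shows "\<not> module.dependent fscale ((\<lambda>(x,y). tp s1 s2 x y) ` (X \<times> Y))"
    and "inj_on (\<lambda>(x,y). tp s1 s2 x y) (X \<times> Y)"
proof -
  have key: "\<exists>p. \<forall>x\<in>X. \<forall>y\<in>Y. tp s1 s2 x y p = (if x = x0 \<and> y = y0 then 1 else 0)"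
    if h0: "x0 \<in> X" "y0 \<in> Y" for x0 y0
  proof -
    obtain \<phi> where \<phi>: "Vector_Spaces.linear s1 (*) \<phi>" "\<phi> x0 = 1" "\<forall>x\<in>X. x \<noteq> x0 \<longrightarrow> \<phi> x = 0"
      using coord_fun[OF vs1 iX h0(1)] by blast
    obtain \<psi> where \<psi>: "Vector_Spaces.linear s2 (*) \<psi>" "\<psi> y0 = 1" "\<forall>y\<in>Y. y \<noteq> y0 \<longrightarrow> \<psi> y = 0"
      using coord_fun[OF vs2 iY h0(2)] by blast
    show ?thesis
    proof (rule exI[of _ "(\<phi>, \<psi>)"], intro ballI)
      fix x y assume xy: "x \<in> X" "y \<in> Y"
      have "tp s1 s2 x y (\<phi>, \<psi>) = \<phi> x * \<psi> y" by (rule tp_apply[OF \<phi>(1) \<psi>(1)])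
      then show "tp s1 s2 x y (\<phi>, \<psi>) = (if x = x0 \<and> y = y0 then 1 else 0)"
        using \<phi>(2,3) \<psi>(2,3) xy by (cases "x = x0"; cases "y = y0") simp_all
    qed
  qed
  show "inj_on (\<lambda>(x,y). tp s1 s2 x y) (X \<times> Y)"
  proof (rule inj_onI, clarsimp)
    fix x y x' y' assume a: "x \<in> X" "y \<in> Y" "x' \<in> X" "y' \<in> Y" and e: "tp s1 s2 x y = tp s1 s2 x' y'"
    obtain p where p: "\<forall>x\<in>X. \<forall>y\<in>Y. tp s1 s2 x y p = (if x = x' \<and> y = y' then 1 else 0)"
      using key[OF a(3,4)] by blast
    have "tp s1 s2 x y p = 1" using e p a(3,4) by simp
    then show "x = x' \<and> y = y'" using p a(1,2)
      by (metis zero_neq_one)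
  qed
  interpret m: module "fscale :: 'a \<Rightarrow> _" by (rule mod_fscale)
  show "m.independent ((\<lambda>(x,y). tp s1 s2 x y) ` (X \<times> Y))"
    unfolding m.independent_explicit_module
  proof (intro allI impI)
    fix t u v assume t: "finite t" "t \<subseteq> (\<lambda>(x,y). tp s1 s2 x y) ` (X \<times> Y)"
      and s: "(\<Sum>v\<in>t. fscale (u v) v) = 0" and v: "v \<in> t"
    have "v \<in> (\<lambda>(x,y). tp s1 s2 x y) ` (X \<times> Y)" using t v by blast
    then obtain x0 y0 where xy0: "x0 \<in> X" "y0 \<in> Y" "v = tp s1 s2 x0 y0" by auto
    obtain p where p: "\<forall>x\<in>X. \<forall>y\<in>Y. tp s1 s2 x y p = (if x = x0 \<and> y = y0 then 1 else 0)"
      using key[OF xy0(1,2)] by blast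
    have pv: "w p = (if w = v then 1 else 0)" if "w \<in> t" for w
    proof -
      have "w \<in> (\<lambda>(x,y). tp s1 s2 x y) ` (X \<times> Y)" using t that by blast
      then obtain x y where xy: "x \<in> X" "y \<in> Y" "w = tp s1 s2 x y" by auto
      have wp: "w p = (if x = x0 \<and> y = y0 then 1 else 0)" using p xy by simp
      show ?thesis
      proof (cases "x = x0 \<and> y = y0")
        case True then show ?thesis using wp xy xy0 by simp
      next
        case False
        then have "w \<noteq> v" using wp xy0 p by (metis one_neq_zero)
        then show ?thesis using wp False by simp
      qed
    qed
    have "0 = (\<Sum>w\<in>t. fscale (u w) w) p" using s by simp
    also have "\<dots> = (\<Sum>w\<in>t. u w * w p)" by (simp add: fun_sum_apply)
    also have "\<dots> = (\<Sum>w\<in>t. if w = v then u w else 0)"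
      by (rule sum.cong) (auto simp: pv)
    also have "\<dots> = u v" using t v by simp
    finally show "u v = 0" by simp
  qed
qed


section \<open>Extension of multilinear maps\<close>

lemma lin_comp: "Vector_Spaces.linear s1 s2 f \<Longrightarrow> Vector_Spaces.linear s2 s3 g \<Longrightarrow>
    Vector_Spaces.linear s1 s3 (\<lambda>x. g (f x))"
  using Vector_Spaces.linear_compose[of s1 s2 f s3 g] by (simp add: o_def)

lemma lin_eq_span:
  assumes "Vector_Spaces.linear s1 s2 f" "Vector_Spaces.linear s1 s2 g"
    and "UNIV \<subseteq> module.span s1 B" "\<And>b. b \<in> B \<Longrightarrow> f b = g b"
  shows "f x = g x"
proof -
  have vs: "Vector_Spaces.vector_space s1" "Vector_Spaces.vector_space s2"
    using assms(1) by (auto simp: Vector_Spaces.linear_iff)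
  interpret p: vector_space_pair s1 s2 using vs by (simp add: vector_space_pair_def)
  show ?thesis by (rule p.linear_eq_on[OF assms(1,2) _ assms(4)]) (use assms(3) in auto)
qed

lemma basis_ex:
  assumes "Vector_Spaces.vector_space s"
  shows "\<exists>B. \<not> module.dependent s B \<and> UNIV \<subseteq> module.span s B"
proof -
  interpret vector_space s by fact
  obtain B where "independent B" "UNIV \<subseteq> span B" using basis_exists[of UNIV] by blast
  then show ?thesis by blast
qed

lemma ext_indep:
  assumes vs1: "Vector_Spaces.vector_space s1" and vs2: "Vector_Spaces.vector_space s2"
    and vs3: "Vector_Spaces.vector_space s3"
    and iX: "\<not> module.dependent s1 X" and iY: "\<not> module.dependent s2 Y"
  shows "\<exists>L. Vector_Spaces.linear fscale s3 L \<and> (\<forall>x\<in>X. \<forall>y\<in>Y. L (tp s1 s2 x y) = h x y)"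
proof -
  let ?f = "\<lambda>(x,y). tp s1 s2 x y"
  note ind = tp_indep[OF vs1 vs2 iX iY]
  interpret p: vector_space_pair "fscale :: 'a \<Rightarrow> _" s3
    using vs_fscale vs3 by (simp add: vector_space_pair_def)
  obtain L where L: "Vector_Spaces.linear fscale s3 L"
    "\<forall>q\<in>?f ` (X \<times> Y). L q = case_prod h (the_inv_into (X \<times> Y) ?f q)"
    using p.linear_independent_extend[OF ind(1), of "\<lambda>q. case_prod h (the_inv_into (X \<times> Y) ?f q)"]
    by blast
  have "L (tp s1 s2 x y) = h x y" if "x \<in> X" "y \<in> Y" for x y
  proof -
    have "tp s1 s2 x y = ?f (x,y)" by simp
    moreover have "(x,y) \<in> X \<times> Y" using that by simp
    ultimately show ?thesis using L(2) the_inv_into_f_f[OF ind(2)] by force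
  qed
  then show ?thesis using L(1) by blast
qed

lemma tp_ext2:
  assumes vs1: "Vector_Spaces.vector_space s1" and vs2: "Vector_Spaces.vector_space s2"
    and vs3: "Vector_Spaces.vector_space s3"
    and l1: "\<And>w. Vector_Spaces.linear s1 s3 (\<lambda>v. \<beta> v w)"
    and l2: "\<And>v. Vector_Spaces.linear s2 s3 (\<beta> v)"
  shows "\<exists>L. Vector_Spaces.linear fscale s3 L \<and> (\<forall>v w. L (tp s1 s2 v w) = \<beta> v w)"
proof -
  obtain X where X: "\<not> module.dependent s1 X" "UNIV \<subseteq> module.span s1 X" using basis_ex[OF vs1] by blast
  obtain Y where Y: "\<not> module.dependent s2 Y" "UNIV \<subseteq> module.span s2 Y" using basis_ex[OF vs2] by blast
  obtain L where L: "Vector_Spaces.linear fscale s3 L" "\<forall>x\<in>X. \<forall>y\<in>Y. L (tp s1 s2 x y) = \<beta> x y"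
    using ext_indep[OF vs1 vs2 vs3 X(1) Y(1)] by blast
  have s1: "L (tp s1 s2 x w) = \<beta> x w" if "x \<in> X" for x w
    by (rule lin_eq_span[where f="\<lambda>w. L (tp s1 s2 x w)", OF lin_comp[OF linear_tp2[OF vs2] L(1)] l2 Y(2)])
       (use L(2) that in auto)
  have "L (tp s1 s2 v w) = \<beta> v w" for v w
    by (rule lin_eq_span[where f="\<lambda>v. L (tp s1 s2 v w)", OF lin_comp[OF linear_tp1[OF vs1] L(1)] l1 X(2)])
       (use s1 in auto)
  then show ?thesis using L(1) by blast
qed

lemma tp_ext4:
  assumes vs1: "Vector_Spaces.vector_space s1" and vs2: "Vector_Spaces.vector_space s2"
    and vs3: "Vector_Spaces.vector_space s3" and vs4: "Vector_Spaces.vector_space s4"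
    and vs5: "Vector_Spaces.vector_space s5"
    and l1: "\<And>x b y. Vector_Spaces.linear s1 s5 (\<lambda>a. \<gamma> a x b y)"
    and l2: "\<And>a b y. Vector_Spaces.linear s2 s5 (\<lambda>x. \<gamma> a x b y)"
    and l3: "\<And>a x y. Vector_Spaces.linear s3 s5 (\<lambda>b. \<gamma> a x b y)"
    and l4: "\<And>a x b. Vector_Spaces.linear s4 s5 (\<lambda>y. \<gamma> a x b y)"
  shows "\<exists>L. Vector_Spaces.linear fscale s5 L \<and>
     (\<forall>a x b y. L (tp fscale fscale (tp s1 s2 a x) (tp s3 s4 b y)) = \<gamma> a x b y)"
proof -
  obtain X1 where X1: "\<not> module.dependent s1 X1" "UNIV \<subseteq> module.span s1 X1" using basis_ex[OF vs1] by blast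
  obtain X2 where X2: "\<not> module.dependent s2 X2" "UNIV \<subseteq> module.span s2 X2" using basis_ex[OF vs2] by blast
  obtain X3 where X3: "\<not> module.dependent s3 X3" "UNIV \<subseteq> module.span s3 X3" using basis_ex[OF vs3] by blast
  obtain X4 where X4: "\<not> module.dependent s4 X4" "UNIV \<subseteq> module.span s4 X4" using basis_ex[OF vs4] by blast
  let ?f = "\<lambda>(x,y). tp s1 s2 x y" and ?g = "\<lambda>(x,y). tp s3 s4 x y"
  note i12 = tp_indep[OF vs1 vs2 X1(1) X2(1)] and i34 = tp_indep[OF vs3 vs4 X3(1) X4(1)]
  obtain L where L: "Vector_Spaces.linear fscale s5 L"
     "\<forall>p\<in>?f ` (X1 \<times> X2). \<forall>q\<in>?g ` (X3 \<times> X4). L (tp fscale fscale p q) =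
        (case the_inv_into (X1 \<times> X2) ?f p of (a,x) \<Rightarrow> case the_inv_into (X3 \<times> X4) ?g q of (b,y) \<Rightarrow> \<gamma> a x b y)"
    using ext_indep[OF vs_fscale vs_fscale vs5 i12(1) i34(1), where h="\<lambda>p q. case the_inv_into (X1 \<times> X2) ?f p of (a,x) \<Rightarrow> case the_inv_into (X3 \<times> X4) ?g q of (b,y) \<Rightarrow> \<gamma> a x b y"] by blast
  have s0: "L (tp fscale fscale (tp s1 s2 a x) (tp s3 s4 b y)) = \<gamma> a x b y"
    if "a \<in> X1" "x \<in> X2" "b \<in> X3" "y \<in> X4" for a x b y
  proof -
    have "tp s1 s2 a x \<in> ?f ` (X1 \<times> X2)" "tp s3 s4 b y \<in> ?g ` (X3 \<times> X4)" using that by force+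
    moreover have "the_inv_into (X1 \<times> X2) ?f (tp s1 s2 a x) = (a,x)"
      using the_inv_into_f_f[OF i12(2), of "(a,x)"] that by simp
    moreover have "the_inv_into (X3 \<times> X4) ?g (tp s3 s4 b y) = (b,y)"
      using the_inv_into_f_f[OF i34(2), of "(b,y)"] that by simp
    ultimately show ?thesis using L(2) by (metis (no_types, lifting) case_prod_conv)
  qed
  have s1: "L (tp fscale fscale (tp s1 s2 a x) (tp s3 s4 b y)) = \<gamma> a x b y"
    if "a \<in> X1" "x \<in> X2" "b \<in> X3" for a x b y
    by (rule lin_eq_span[where f="\<lambda>y. L (tp fscale fscale (tp s1 s2 a x) (tp s3 s4 b y))",
          OF lin_comp[OF lin_comp[OF linear_tp2[OF vs4] linear_tp2[OF vs_fscale]] L(1)] l4 X4(2)])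
       (use s0 that in auto)
  have s2: "L (tp fscale fscale (tp s1 s2 a x) (tp s3 s4 b y)) = \<gamma> a x b y"
    if "a \<in> X1" "x \<in> X2" for a x b y
    by (rule lin_eq_span[where f="\<lambda>b. L (tp fscale fscale (tp s1 s2 a x) (tp s3 s4 b y))",
          OF lin_comp[OF lin_comp[OF linear_tp1[OF vs3] linear_tp2[OF vs_fscale]] L(1)] l3 X3(2)])
       (use s1 that in auto)
  have s3: "L (tp fscale fscale (tp s1 s2 a x) (tp s3 s4 b y)) = \<gamma> a x b y"
    if "a \<in> X1" for a x b y
    by (rule lin_eq_span[where f="\<lambda>x. L (tp fscale fscale (tp s1 s2 a x) (tp s3 s4 b y))",
          OF lin_comp[OF lin_comp[OF linear_tp2[OF vs2] linear_tp1[OF vs_fscale]] L(1)] l2 X2(2)])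
       (use s2 that in auto)
  have "L (tp fscale fscale (tp s1 s2 a x) (tp s3 s4 b y)) = \<gamma> a x b y" for a x b y
    by (rule lin_eq_span[where f="\<lambda>a. L (tp fscale fscale (tp s1 s2 a x) (tp s3 s4 b y))",
          OF lin_comp[OF lin_comp[OF linear_tp1[OF vs1] linear_tp1[OF vs_fscale]] L(1)] l1 X1(2)])
       (use s3 in auto)
  then show ?thesis using L(1) by blast
qed

lemma tp_ext3:
  assumes vs: "Vector_Spaces.vector_space s" and vs5: "Vector_Spaces.vector_space s5"
    and l1: "\<And>v w. Vector_Spaces.linear s s5 (\<lambda>u. \<gamma> u v w)"
    and l2: "\<And>u w. Vector_Spaces.linear s s5 (\<lambda>v. \<gamma> u v w)"
    and l3: "\<And>u v. Vector_Spaces.linear s s5 (\<lambda>w. \<gamma> u v w)"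
  shows "\<exists>L. Vector_Spaces.linear fscale s5 L \<and>
     (\<forall>u v w. L (tp fscale s (tp s s u v) w) = \<gamma> u v w)"
proof -
  obtain X where X: "\<not> module.dependent s X" "UNIV \<subseteq> module.span s X" using basis_ex[OF vs] by blast
  let ?f = "\<lambda>(x,y). tp s s x y"
  note i = tp_indep[OF vs vs X(1) X(1)]
  obtain L where L: "Vector_Spaces.linear fscale s5 L"
     "\<forall>p\<in>?f ` (X \<times> X). \<forall>w\<in>X. L (tp fscale s p w) =
        (case the_inv_into (X \<times> X) ?f p of (u,v) \<Rightarrow> \<gamma> u v w)"
    using ext_indep[OF vs_fscale vs vs5 i(1) X(1), where h="\<lambda>p w. case the_inv_into (X \<times> X) ?f p of (u,v) \<Rightarrow> \<gamma> u v w"] by blast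
  have s0: "L (tp fscale s (tp s s u v) w) = \<gamma> u v w"
    if "u \<in> X" "v \<in> X" "w \<in> X" for u v w
  proof -
    have "tp s s u v \<in> ?f ` (X \<times> X)" using that by force
    moreover have "the_inv_into (X \<times> X) ?f (tp s s u v) = (u,v)"
      using the_inv_into_f_f[OF i(2), of "(u,v)"] that by simp
    ultimately show ?thesis using L(2) that by (metis (no_types, lifting) case_prod_conv)
  qed
  have s1: "L (tp fscale s (tp s s u v) w) = \<gamma> u v w" if "u \<in> X" "v \<in> X" for u v w
    by (rule lin_eq_span[where f="\<lambda>w. L (tp fscale s (tp s s u v) w)",
          OF lin_comp[OF linear_tp2[OF vs] L(1)] l3 X(2)])
       (use s0 that in auto)
  have s2: "L (tp fscale s (tp s s u v) w) = \<gamma> u v w" if "u \<in> X" for u v w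
    by (rule lin_eq_span[where f="\<lambda>v. L (tp fscale s (tp s s u v) w)",
          OF lin_comp[OF lin_comp[OF linear_tp2[OF vs] linear_tp1[OF vs_fscale]] L(1)] l2 X(2)])
       (use s1 that in auto)
  have "L (tp fscale s (tp s s u v) w) = \<gamma> u v w" for u v w
    by (rule lin_eq_span[where f="\<lambda>u. L (tp fscale s (tp s s u v) w)",
          OF lin_comp[OF lin_comp[OF linear_tp1[OF vs] linear_tp1[OF vs_fscale]] L(1)] l1 X(2)])
       (use s2 in auto)
  then show ?thesis using L(1) by blast
qed


lemma lin_vs1: "Vector_Spaces.linear s1 s2 f \<Longrightarrow> Vector_Spaces.vector_space s1"
  by (simp add: Vector_Spaces.linear_iff)
lemma lin_vs2: "Vector_Spaces.linear s1 s2 f \<Longrightarrow> Vector_Spaces.vector_space s2"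
  by (simp add: Vector_Spaces.linear_iff)

lemma lin_preimage_sub:
  assumes "Vector_Spaces.linear s1 s2 f" "module.subspace s2 S"
  shows "module.subspace s1 {x. f x \<in> S}"
proof -
  interpret module_hom s1 s2 f using assms(1) by (simp add: module_hom_iff_linear)
  show ?thesis by (rule subspace_linear_preimage) fact
qed

lemma span_sub:
  assumes "Vector_Spaces.vector_space s" "module.subspace s T" "B \<subseteq> T"
  shows "module.span s B \<subseteq> T"
proof -
  interpret vector_space s by fact
  show ?thesis using assms(2,3) span_minimal by blast
qed

lemma lin_image_span:
  assumes "Vector_Spaces.linear s1 s2 f"
  shows "f ` module.span s1 S = module.span s2 (f ` S)"
proof -
  interpret module_hom s1 s2 f using assms(1) by (simp add: module_hom_iff_linear)
  show ?thesis by (rule span_image[symmetric])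
qed

lemma lin_image_sub:
  assumes "Vector_Spaces.linear s1 s2 f" "module.subspace s1 S"
  shows "module.subspace s2 (f ` S)"
proof -
  interpret module_hom s1 s2 f using assms(1) by (simp add: module_hom_iff_linear)
  show ?thesis by (rule subspace_image) fact
qed

lemma bilin_span:
  assumes l1: "\<And>w. Vector_Spaces.linear s1 s3 (\<lambda>v. f v w)"
    and l2: "\<And>v. Vector_Spaces.linear s2 s3 (f v)"
    and S: "module.subspace s3 S" and AB: "\<And>a b. a \<in> A \<Longrightarrow> b \<in> B \<Longrightarrow> f a b \<in> S"
    and v: "v \<in> module.span s1 A" and w: "w \<in> module.span s2 B"
  shows "f v w \<in> S"
proof -
  have st1: "f a w \<in> S" if "a \<in> A" for a
    using span_sub[OF lin_vs1[OF l2] lin_preimage_sub[OF l2 S], of B] AB that w by blast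
  show ?thesis
    using span_sub[OF lin_vs1[OF l1] lin_preimage_sub[OF l1 S], of A] st1 v by blast
qed

lemma trilin_span:
  assumes l1: "\<And>v w. Vector_Spaces.linear s1 s4 (\<lambda>u. f u v w)"
    and l2: "\<And>u w. Vector_Spaces.linear s2 s4 (\<lambda>v. f u v w)"
    and l3: "\<And>u v. Vector_Spaces.linear s3 s4 (\<lambda>w. f u v w)"
    and S: "module.subspace s4 S"
    and ABC: "\<And>a b c. a \<in> A \<Longrightarrow> b \<in> B \<Longrightarrow> c \<in> C \<Longrightarrow> f a b c \<in> S"
    and u: "u \<in> module.span s1 A" and v: "v \<in> module.span s2 B" and w: "w \<in> module.span s3 C"
  shows "f u v w \<in> S"
proof -
  have "f a v w \<in> S" if "a \<in> A" for a
    by (rule bilin_span[OF l2 l3 S _ v w]) (use ABC that in auto)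
  then show ?thesis
    using span_sub[OF lin_vs1[OF l1] lin_preimage_sub[OF l1 S], of A] u by blast
qed

lemma wedge2_add1: "wedge2 s (u + u') v = wedge2 s u v + wedge2 s u' v"
  by (simp add: wedge2_def tp_lin fun_eq_iff algebra_simps)
lemma wedge2_add2: "wedge2 s u (v + v') = wedge2 s u v + wedge2 s u v'"
  by (simp add: wedge2_def tp_lin fun_eq_iff algebra_simps)
lemma wedge2_scale1: "wedge2 s (s c u) v = fscale c (wedge2 s u v)"
  by (simp add: wedge2_def tp_lin fun_eq_iff algebra_simps)
lemma wedge2_scale2: "wedge2 s u (s c v) = fscale c (wedge2 s u v)"
  by (simp add: wedge2_def tp_lin fun_eq_iff algebra_simps)
lemma wedge2_minus1: "wedge2 s (- u) v = - wedge2 s u v"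
  by (simp add: wedge2_def tp_lin fun_eq_iff algebra_simps)
lemma wedge2_minus2: "wedge2 s u (- v) = - wedge2 s u v"
  by (simp add: wedge2_def tp_lin fun_eq_iff algebra_simps)
lemma wedge2_diff1: "wedge2 s (u - u') v = wedge2 s u v - wedge2 s u' v"
  by (simp add: wedge2_def tp_lin fun_eq_iff algebra_simps)
lemma wedge2_diff2: "wedge2 s u (v - v') = wedge2 s u v - wedge2 s u v'"
  by (simp add: wedge2_def tp_lin fun_eq_iff algebra_simps)
lemma wedge2_swap: "wedge2 s v u = - wedge2 s u v"
  by (simp add: wedge2_def tp_lin fun_eq_iff algebra_simps)
lemma wedge2_zero1: "wedge2 s 0 v = 0"
  by (simp add: wedge2_def tp_lin fun_eq_iff algebra_simps)
lemma wedge2_zero2: "wedge2 s u 0 = 0"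
  by (simp add: wedge2_def tp_lin fun_eq_iff algebra_simps)

lemma vee2_add1: "vee2 s (u + u') v = vee2 s u v + vee2 s u' v"
  by (simp add: vee2_def tp_lin fun_eq_iff algebra_simps)
lemma vee2_add2: "vee2 s u (v + v') = vee2 s u v + vee2 s u v'"
  by (simp add: vee2_def tp_lin fun_eq_iff algebra_simps)
lemma vee2_scale1: "vee2 s (s c u) v = fscale c (vee2 s u v)"
  by (simp add: vee2_def tp_lin fun_eq_iff algebra_simps)
lemma vee2_scale2: "vee2 s u (s c v) = fscale c (vee2 s u v)"
  by (simp add: vee2_def tp_lin fun_eq_iff algebra_simps)
lemma vee2_minus1: "vee2 s (- u) v = - vee2 s u v"
  by (simp add: vee2_def tp_lin fun_eq_iff algebra_simps)
lemma vee2_minus2: "vee2 s u (- v) = - vee2 s u v"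
  by (simp add: vee2_def tp_lin fun_eq_iff algebra_simps)
lemma vee2_diff1: "vee2 s (u - u') v = vee2 s u v - vee2 s u' v"
  by (simp add: vee2_def tp_lin fun_eq_iff algebra_simps)
lemma vee2_diff2: "vee2 s u (v - v') = vee2 s u v - vee2 s u v'"
  by (simp add: vee2_def tp_lin fun_eq_iff algebra_simps)
lemma vee2_swap: "vee2 s v u = vee2 s u v"
  by (simp add: vee2_def tp_lin fun_eq_iff algebra_simps)
lemma vee2_zero1: "vee2 s 0 v = 0"
  by (simp add: vee2_def tp_lin fun_eq_iff algebra_simps)
lemma vee2_zero2: "vee2 s u 0 = 0"
  by (simp add: vee2_def tp_lin fun_eq_iff algebra_simps)

lemma lin_fscale: "Vector_Spaces.linear fscale fscale (fscale c)"
  by (rule linI) (auto simp: vs_fscale fun_eq_iff algebra_simps)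

lemma linear_wedge2_1: "Vector_Spaces.vector_space s \<Longrightarrow> Vector_Spaces.linear s fscale (\<lambda>u. wedge2 s u v)"
  by (rule linI) (auto simp: vs_fscale wedge2_add1 wedge2_scale1)
lemma linear_wedge2_2: "Vector_Spaces.vector_space s \<Longrightarrow> Vector_Spaces.linear s fscale (wedge2 s u)"
  by (rule linI) (auto simp: vs_fscale wedge2_add2 wedge2_scale2)
lemma linear_vee2_1: "Vector_Spaces.vector_space s \<Longrightarrow> Vector_Spaces.linear s fscale (\<lambda>u. vee2 s u v)"
  by (rule linI) (auto simp: vs_fscale vee2_add1 vee2_scale1)
lemma linear_vee2_2: "Vector_Spaces.vector_space s \<Longrightarrow> Vector_Spaces.linear s fscale (vee2 s u)"
  by (rule linI) (auto simp: vs_fscale vee2_add2 vee2_scale2)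

section \<open>Boundary map\<close>

lemma nz248:
  assumes "(2::'f::field) \<noteq> 0"
  shows "(4::'f) \<noteq> 0" "(8::'f) \<noteq> 0" "(16::'f) \<noteq> 0"
proof -
  have a: "(2::'f) * 2 \<noteq> 0" using assms by (metis mult_eq_0_iff)
  have b: "(2::'f) * 2 = 4" by simp
  show c: "(4::'f) \<noteq> 0" using a unfolding b .
  have a: "(4::'f) * 2 \<noteq> 0" using assms c by (metis mult_eq_0_iff)
  have b: "(4::'f) * 2 = 8" by simp
  show d: "(8::'f) \<noteq> 0" using a unfolding b .
  have a: "(8::'f) * 2 \<noteq> 0" using assms d by (metis mult_eq_0_iff)
  have b: "(8::'f) * 2 = 16" by simp
  show "(16::'f) \<noteq> 0" using a unfolding b .
qed

lemma bdry_spec: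
  fixes s :: "'f::field \<Rightarrow> 'v::ab_group_add \<Rightarrow> 'v"
  assumes vs: "Vector_Spaces.vector_space s" and two: "(2::'f) \<noteq> 0"
    and b1: "\<And>v. Vector_Spaces.linear s s (\<lambda>u. b u v)" and b2: "\<And>u. Vector_Spaces.linear s s (b u)"
    and anti: "\<And>u v. u \<in> H \<Longrightarrow> v \<in> H \<Longrightarrow> b v u = - b u v"
  shows "Vector_Spaces.linear fscale fscale (bdry s b H) \<and>
    (\<forall>u\<in>H. \<forall>v\<in>H. \<forall>w\<in>H. bdry s b H (wedge3 s u v w) =
          wedge2 s (b u v) w + wedge2 s (b v w) u + wedge2 s (b w u) v)"
proof -
  let ?g = "\<lambda>u v w. fscale (1/2::'f) (wedge2 s (b u v) w)"
  obtain L where L: "Vector_Spaces.linear fscale fscale L" "\<forall>u v w. L (tp fscale s (tp s s u v) w) = ?g u v w"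
  proof -
    have l1: "Vector_Spaces.linear s fscale (\<lambda>u. ?g u v w)" for v w
      by (rule lin_comp[OF lin_comp[OF b1 linear_wedge2_1[OF vs]] lin_fscale])
    have l2: "Vector_Spaces.linear s fscale (\<lambda>v. ?g u v w)" for u w
      by (rule lin_comp[OF lin_comp[OF b2 linear_wedge2_1[OF vs]] lin_fscale])
    have l3: "Vector_Spaces.linear s fscale (\<lambda>w. ?g u v w)" for u v
      by (rule lin_comp[OF linear_wedge2_2[OF vs] lin_fscale])
    show ?thesis using tp_ext3[OF vs vs_fscale l1 l2 l3] that by blast
  qed
  have "L (wedge3 s u v w) = wedge2 s (b u v) w + wedge2 s (b v w) u + wedge2 s (b w u) v"
    if "u \<in> H" "v \<in> H" "w \<in> H" for u v w
  proof -
    have "L (wedge3 s u v w) = ?g u v w - ?g v u w + ?g v w u - ?g w v u + ?g w u v - ?g u w v"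
      unfolding wedge3_def tp3_def using L by (simp add: lin_add[OF L(1)] lin_diff[OF L(1)])
    also have "\<dots> = wedge2 s (b u v) w + wedge2 s (b v w) u + wedge2 s (b w u) v"
    proof -
      have h: "fscale (1/2::'f) X - fscale (1/2) (- X) = X" for X :: "('v,'v,'f) tens"
        using two by (simp add: fun_eq_iff field_simps)
      have e: "b v u = - b u v" "b w v = - b v w" "b u w = - b w u"
        using anti[OF that(1) that(2)] anti[OF that(2) that(3)] anti[OF that(3) that(1)] by simp_all
      show ?thesis unfolding e wedge2_minus1 using two nz248[OF two] by (simp add: fun_eq_iff field_simps)
    qed
    finally show ?thesis .
  qed
  then have "\<exists>D. Vector_Spaces.linear fscale fscale D \<and>
    (\<forall>u\<in>H. \<forall>v\<in>H. \<forall>w\<in>H. D (wedge3 s u v w) =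
          wedge2 s (b u v) w + wedge2 s (b v w) u + wedge2 s (b w u) v)" using L(1) by blast
  then show ?thesis unfolding bdry_def by (rule someI_ex)
qed


lemma lin_sub: "Vector_Spaces.linear s1 s2 f \<Longrightarrow> Vector_Spaces.linear s1 s2 g \<Longrightarrow>
   Vector_Spaces.linear s1 s2 (\<lambda>x. f x - g x)"
proof -
  assume f: "Vector_Spaces.linear s1 s2 f" and g: "Vector_Spaces.linear s1 s2 g"
  interpret vs2: vector_space s2 using lin_vs2[OF f] .
  show ?thesis
    by (rule linI[OF lin_vs1[OF f] lin_vs2[OF f]])
       (simp_all add: lin_add[OF f] lin_add[OF g] lin_scale[OF f] lin_scale[OF g] vs2.scale_right_diff_distrib)
qed

lemma antisym_val:
  assumes vs5: "Vector_Spaces.vector_space s5" and two: "(2::'f::field) \<noteq> 0"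
    and L: "Vector_Spaces.linear fscale s5 L"
    and e1: "L (tp fscale fscale u v) = g" and e2: "L (tp fscale fscale v u) = - g"
  shows "L (wedge2 (fscale :: 'f \<Rightarrow> _) u v) = g"
proof -
  interpret vs5: vector_space s5 by fact
  have "L (wedge2 fscale u v) = s5 (1/2) (g + g)"
    unfolding wedge2_def lin_scale[OF L] lin_diff[OF L] e1 e2 by simp
  also have "g + g = s5 2 g" using vs5.scale_left_distrib[of 1 1 g] by simp
  also have "s5 (1/2) (s5 2 g) = g" using two by simp
  finally show ?thesis .
qed


lemma lin_plus: "Vector_Spaces.linear s1 s2 f \<Longrightarrow> Vector_Spaces.linear s1 s2 g \<Longrightarrow>
   Vector_Spaces.linear s1 s2 (\<lambda>x. f x + g x)"
proof -
  assume f: "Vector_Spaces.linear s1 s2 f" and g: "Vector_Spaces.linear s1 s2 g"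
  interpret vs2: vector_space s2 using lin_vs2[OF f] .
  show ?thesis
    by (rule linI[OF lin_vs1[OF f] lin_vs2[OF f]])
       (simp_all add: lin_add[OF f] lin_add[OF g] lin_scale[OF f] lin_scale[OF g] vs2.scale_right_distrib)
qed

lemma fsub0: "module.subspace (fscale :: 'f::field \<Rightarrow> ('x \<Rightarrow> 'f) \<Rightarrow> _) {0}"
  using module.subspace_single_0[OF mod_fscale] .


abbreviation fsub :: "('x \<Rightarrow> 'f::field) set \<Rightarrow> bool" where "fsub S \<equiv> module.subspace fscale S"

lemma fsub_add: "fsub S \<Longrightarrow> x \<in> S \<Longrightarrow> y \<in> S \<Longrightarrow> x + y \<in> S"
  using module.subspace_add[OF mod_fscale] by blast
lemma fsub_diff: "fsub S \<Longrightarrow> x \<in> S \<Longrightarrow> y \<in> S \<Longrightarrow> x - y \<in> S"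
  using module.subspace_diff[OF mod_fscale] by blast
lemma fsub_neg: "fsub S \<Longrightarrow> x \<in> S \<Longrightarrow> - x \<in> S"
  using module.subspace_neg[OF mod_fscale] by blast
lemma fsub_scale: "fsub S \<Longrightarrow> x \<in> S \<Longrightarrow> fscale c x \<in> S"
  using module.subspace_scale[OF mod_fscale] by blast
lemma fsub_0: "fsub S \<Longrightarrow> 0 \<in> S"
  using module.subspace_0[OF mod_fscale] by blast
lemma fsub_fspan: "fsub (fspan S)"
  unfolding fspan_def using module.subspace_span[OF mod_fscale] .
lemma fspan_base: "x \<in> S \<Longrightarrow> x \<in> fspan S"
  unfolding fspan_def using module.span_base[OF mod_fscale] .
lemma fspan_sub: "fsub T \<Longrightarrow> S \<subseteq> T \<Longrightarrow> fspan S \<subseteq> T"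
  unfolding fspan_def using span_sub[OF vs_fscale] by blast
lemma fspan_mono: "S \<subseteq> T \<Longrightarrow> fspan S \<subseteq> fspan T"
  by (rule fspan_sub[OF fsub_fspan]) (use fspan_base in blast)

lemma ssum_sub: "fsub U \<Longrightarrow> fsub V \<Longrightarrow> fsub (ssum U V)"
  unfolding ssum_def using vector_space.subspace_sums[OF vs_fscale] by blast

lemma ssum_mem: "u \<in> U \<Longrightarrow> v \<in> V \<Longrightarrow> u + v \<in> ssum U V"
  unfolding ssum_def by blast

lemma lin_span_mem: "Vector_Spaces.linear s1 s2 f \<Longrightarrow> y \<in> module.span s1 B \<Longrightarrow> f y \<in> module.span s2 (f ` B)"
  using lin_image_span by blast

lemma tsp_gen:
  assumes vs1: "Vector_Spaces.vector_space s1" and vs2: "Vector_Spaces.vector_space s2"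
    and U: "U \<subseteq> module.span s1 U0" and V: "V \<subseteq> module.span s2 V0"
  shows "tsp s1 s2 U V \<subseteq> fspan {tp s1 s2 u v | u v. u \<in> U0 \<and> v \<in> V0}"
  unfolding tsp_def
proof (rule fspan_sub[OF fsub_fspan], rule subsetI)
  fix t assume "t \<in> {tp s1 s2 u v |u v. u \<in> U \<and> v \<in> V}"
  then obtain u v where t: "t = tp s1 s2 u v" and uv: "u \<in> U" "v \<in> V" by blast
  have gen: "tp s1 s2 a b \<in> fspan {tp s1 s2 u v | u v. u \<in> U0 \<and> v \<in> V0}" if "a \<in> U0" "b \<in> V0" for a b
    by (rule fspan_base) (use that in blast)
  show "t \<in> fspan {tp s1 s2 u v | u v. u \<in> U0 \<and> v \<in> V0}"
    unfolding t
    by (rule bilin_span[where f="tp s1 s2", OF linear_tp1[OF vs1] linear_tp2[OF vs2] fsub_fspan gen])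
       (use U V uv in blast)+
qed

lemma tsp_base: "u \<in> U \<Longrightarrow> v \<in> V \<Longrightarrow> tp s1 s2 u v \<in> tsp s1 s2 U V"
  unfolding tsp_def by (rule fspan_base) blast

lemma fsub_tsp: "fsub (tsp s1 s2 U V)"
  unfolding tsp_def by (rule fsub_fspan)

lemma lin_id: "Vector_Spaces.vector_space s \<Longrightarrow> Vector_Spaces.linear s s (\<lambda>x. x)"
  by (rule linI) auto


locale L23 =
  fixes sa :: "'f::field \<Rightarrow> 'a::comm_ring_1 \<Rightarrow> 'a"
    and sk :: "'f \<Rightarrow> 'k::ab_group_add \<Rightarrow> 'k"
    and br :: "'k \<Rightarrow> 'k \<Rightarrow> 'k"
  assumes two: "(2::'f) \<noteq> 0"
    and vsA: "Vector_Spaces.vector_space sa"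
    and algA: "\<And>c a b. sa c (a * b) = sa c a * b"
    and vsk: "Vector_Spaces.vector_space sk"
    and br_lin1: "\<And>y. Vector_Spaces.linear sk sk (\<lambda>x. br x y)"
    and br_lin2: "\<And>x. Vector_Spaces.linear sk sk (br x)"
    and br_alt: "\<And>x. br x x = 0"
    and jacobi: "\<And>x y z. br x (br y z) + br y (br z x) + br z (br x y) = 0"
begin

lemma nz_bit0[simp]: "numeral n \<noteq> (0::'f) \<Longrightarrow> numeral (Num.Bit0 n) \<noteq> (0::'f)"
proof -
  assume n: "numeral n \<noteq> (0::'f)"
  have "(numeral (Num.Bit0 n)::'f) = 2 * numeral n" by (metis mult_2 numeral_Bit0)
  then show ?thesis using n two by (metis mult_eq_0_iff)
qed

lemma nz: "(2::'f) \<noteq> 0" "(4::'f) \<noteq> 0" "(8::'f) \<noteq> 0" "(16::'f) \<noteq> 0"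
  by (simp_all add: nz_bit0)

lemma lin_mult1: "Vector_Spaces.linear sa sa (\<lambda>a. a * b)"
  by (rule linI[OF vsA vsA]) (simp_all add: algA distrib_right)

lemma lin_mult2: "Vector_Spaces.linear sa sa (\<lambda>b. a * b)"
  by (rule linI[OF vsA vsA]) (simp_all add: distrib_left, metis algA mult.commute)

lemma br_anti: "br y x = - br x y"
proof -
  have "0 = br (x + y) (x + y)" by (simp add: br_alt)
  also have "\<dots> = br x x + br x y + (br y x + br y y)"
    using lin_add[OF br_lin1, of x y "x + y"] lin_add[OF br_lin2, of x x y] lin_add[OF br_lin2, of y x y]
    by simp
  finally show ?thesis by (simp add: br_alt add_eq_0_iff)
qed

abbreviation G :: "'a \<Rightarrow> 'k \<Rightarrow> ('a, 'k, 'f) tens" where "G a x \<equiv> tp sa sk a x"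
abbreviation W :: "('a, 'k, 'f) tens \<Rightarrow> ('a, 'k, 'f) tens \<Rightarrow> (('a, 'k, 'f) tens, ('a, 'k, 'f) tens, 'f) tens"
  where "W u v \<equiv> wedge2 fscale u v"

lemma gbr_spec:
  "(\<forall>u. Vector_Spaces.linear fscale fscale (gbr sa sk br u)) \<and>
   (\<forall>v. Vector_Spaces.linear fscale fscale (\<lambda>u. gbr sa sk br u v)) \<and>
   (\<forall>a x a' x'. gbr sa sk br (G a x) (G a' x') = G (a * a') (br x x'))"
proof -
  obtain L where L: "Vector_Spaces.linear fscale fscale L"
    "\<forall>a x b y. L (tp fscale fscale (G a x) (G b y)) = G (a * b) (br x y)"
    using tp_ext4[OF vsA vsk vsA vsk vs_fscale,
      OF lin_comp[OF lin_mult1 linear_tp1[OF vsA]] lin_comp[OF br_lin1 linear_tp2[OF vsk]]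
      lin_comp[OF lin_mult2 linear_tp1[OF vsA]] lin_comp[OF br_lin2 linear_tp2[OF vsk]]]
    by blast
  let ?B = "\<lambda>u v. L (tp fscale fscale u v)"
  have "(\<forall>u. Vector_Spaces.linear fscale fscale (?B u)) \<and>
   (\<forall>v. Vector_Spaces.linear fscale fscale (\<lambda>u. ?B u v)) \<and>
   (\<forall>a x a' x'. ?B (G a x) (G a' x') = G (a * a') (br x x'))"
    using lin_comp[OF linear_tp2[OF vs_fscale] L(1)] lin_comp[OF linear_tp1[OF vs_fscale] L(1)] L(2)
    by blast
  then show ?thesis unfolding gbr_def by (rule someI_ex[where P="\<lambda>B. (\<forall>u. Vector_Spaces.linear fscale fscale (B u)) \<and>
      (\<forall>v. Vector_Spaces.linear fscale fscale (\<lambda>u. B u v)) \<and>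
      (\<forall>a x a' x'. B (G a x) (G a' x') = G (a * a') (br x x'))", OF exI])
qed


abbreviation Bg where "Bg \<equiv> gbr sa sk br"

lemma Bg_lin2: "Vector_Spaces.linear fscale fscale (Bg u)" using gbr_spec by blast
lemma Bg_lin1: "Vector_Spaces.linear fscale fscale (\<lambda>u. Bg u v)" using gbr_spec by blast
lemma Bg_G: "Bg (G a x) (G a' x') = G (a * a') (br x x')" using gbr_spec by blast

lemma gsp_eq: "gsp sa sk = fspan {G a x | a x. True}"
  by (simp add: gsp_def tsp_def)

lemma G_gsp: "G a x \<in> gsp sa sk"
  unfolding gsp_eq fspan_def by (rule module.span_base[OF mod_fscale]) blast

lemma Bg_anti: "u \<in> gsp sa sk \<Longrightarrow> v \<in> gsp sa sk \<Longrightarrow> Bg v u = - Bg u v"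
proof -
  assume u: "u \<in> gsp sa sk" and v: "v \<in> gsp sa sk"
  have "Bg v u + Bg u v \<in> {0}"
  proof (rule bilin_span[where f="\<lambda>u v. Bg v u + Bg u v", OF _ _ fsub0])
    show "Vector_Spaces.linear fscale fscale (\<lambda>u. Bg v u + Bg u v)" for v
      by (rule lin_plus[OF Bg_lin2 Bg_lin1])
    show "Vector_Spaces.linear fscale fscale (\<lambda>v. Bg v u + Bg u v)" for u
      by (rule lin_plus[OF Bg_lin1 Bg_lin2])
    show "Bg b a + Bg a b \<in> {0}" if ha: "a \<in> {G a x | a x. True}" "b \<in> {G a x | a x. True}" for a b
    proof -
      obtain a1 x1 b1 y1 where e: "a = G a1 x1" "b = G b1 y1" using ha by blast
      show ?thesis unfolding e Bg_G br_anti[of x1 y1] tp_minus2 by (simp add: mult.commute)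
    qed
  qed (use u v in \<open>simp_all add: gsp_eq fspan_def\<close>)
  then show ?thesis by (simp add: eq_neg_iff_add_eq_0)
qed

abbreviation Dg where "Dg \<equiv> bdry fscale Bg (gsp sa sk)"

lemma Dg_spec: "Vector_Spaces.linear fscale fscale Dg \<and>
    (\<forall>u\<in>gsp sa sk. \<forall>v\<in>gsp sa sk. \<forall>w\<in>gsp sa sk. Dg (wedge3 fscale u v w) =
          W (Bg u v) w + W (Bg v w) u + W (Bg w u) v)"
  by (rule bdry_spec[OF vs_fscale two Bg_lin1 Bg_lin2 Bg_anti])

lemma Dg_lin: "Vector_Spaces.linear fscale fscale Dg" using Dg_spec by blast
lemma Dg_wedge3: "u \<in> gsp sa sk \<Longrightarrow> v \<in> gsp sa sk \<Longrightarrow> w \<in> gsp sa sk \<Longrightarrow>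
   Dg (wedge3 fscale u v w) = W (Bg u v) w + W (Bg v w) u + W (Bg w u) v"
  using Dg_spec by blast

abbreviation Dk where "Dk \<equiv> bdry sk br UNIV"

lemma Dk_spec: "Vector_Spaces.linear fscale fscale Dk \<and>
    (\<forall>u\<in>UNIV. \<forall>v\<in>UNIV. \<forall>w\<in>UNIV. Dk (wedge3 sk u v w) =
          wedge2 sk (br u v) w + wedge2 sk (br v w) u + wedge2 sk (br w u) v)"
  by (rule bdry_spec[OF vsk two br_lin1 br_lin2 br_anti])

lemma Dk_lin: "Vector_Spaces.linear fscale fscale Dk" using Dk_spec by blast
lemma Dk_wedge3: "Dk (wedge3 sk u v w) = wedge2 sk (br u v) w + wedge2 sk (br v w) u + wedge2 sk (br w u) v"
  using Dk_spec by blast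

lemma p1_spec: "Vector_Spaces.linear fscale fscale (p1 sa sk) \<and>
     (\<forall>a b x y. p1 sa sk (W (G a x) (G b y)) = tp fscale fscale (wedge2 sa a b) (vee2 sk x y))"
proof -
  obtain L where L: "Vector_Spaces.linear fscale fscale L"
    "\<forall>a x b y. L (tp fscale fscale (G a x) (G b y)) = tp fscale fscale (wedge2 sa a b) (vee2 sk x y)"
    using tp_ext4[OF vsA vsk vsA vsk vs_fscale,
      OF lin_comp[OF linear_wedge2_1[OF vsA] linear_tp1[OF vs_fscale]]
         lin_comp[OF linear_vee2_1[OF vsk] linear_tp2[OF vs_fscale]]
         lin_comp[OF linear_wedge2_2[OF vsA] linear_tp1[OF vs_fscale]]
         lin_comp[OF linear_vee2_2[OF vsk] linear_tp2[OF vs_fscale]]]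
    by blast
  have "L (W (G a x) (G b y)) = tp fscale fscale (wedge2 sa a b) (vee2 sk x y)" for a b x y
    by (rule antisym_val[OF vs_fscale two L(1)]) (simp_all add: L(2) wedge2_swap[of sa b a] vee2_swap[of sk y x] tp_minus1)
  then have "\<exists>L. Vector_Spaces.linear fscale fscale L \<and>
     (\<forall>a b x y. L (W (G a x) (G b y)) = tp fscale fscale (wedge2 sa a b) (vee2 sk x y))"
    using L(1) by blast
  then show ?thesis unfolding p1_def by (rule someI_ex)
qed

lemma p2_spec: "Vector_Spaces.linear fscale fscale (p2 sa sk) \<and>
     (\<forall>a b x y. p2 sa sk (W (G a x) (G b y)) = tp sa fscale (a * b) (wedge2 sk x y))"
proof -
  obtain L where L: "Vector_Spaces.linear fscale fscale L"
    "\<forall>a x b y. L (tp fscale fscale (G a x) (G b y)) = tp sa fscale (a * b) (wedge2 sk x y)"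
    using tp_ext4[OF vsA vsk vsA vsk vs_fscale,
      OF lin_comp[OF lin_mult1 linear_tp1[OF vsA]]
         lin_comp[OF linear_wedge2_1[OF vsk] linear_tp2[OF vs_fscale]]
         lin_comp[OF lin_mult2 linear_tp1[OF vsA]]
         lin_comp[OF linear_wedge2_2[OF vsk] linear_tp2[OF vs_fscale]]]
    by blast
  have "L (W (G a x) (G b y)) = tp sa fscale (a * b) (wedge2 sk x y)" for a b x y
    by (rule antisym_val[OF vs_fscale two L(1)]) (simp_all add: L(2) mult.commute[of b a] wedge2_swap[of sk y x] tp_minus2)
  then have "\<exists>L. Vector_Spaces.linear fscale fscale L \<and>
     (\<forall>a b x y. L (W (G a x) (G b y)) = tp sa fscale (a * b) (wedge2 sk x y))"
    using L(1) by blast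
  then show ?thesis unfolding p2_def by (rule someI_ex)
qed

lemma p3_spec: "Vector_Spaces.linear fscale fscale (p3 sa sk) \<and>
     (\<forall>a b x y. p3 sa sk (W (G a x) (G b y)) =
        tp fscale fscale (vee2 sa a b - vee2 sa (a * b) 1) (wedge2 sk x y))"
proof -
  obtain L where L: "Vector_Spaces.linear fscale fscale L"
    "\<forall>a x b y. L (tp fscale fscale (G a x) (G b y)) = tp fscale fscale (vee2 sa a b - vee2 sa (a * b) 1) (wedge2 sk x y)"
    using tp_ext4[OF vsA vsk vsA vsk vs_fscale,
      OF lin_comp[OF lin_sub[OF linear_vee2_1[OF vsA] lin_comp[OF lin_mult1 linear_vee2_1[OF vsA]]] linear_tp1[OF vs_fscale]]
         lin_comp[OF linear_wedge2_1[OF vsk] linear_tp2[OF vs_fscale]]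
         lin_comp[OF lin_sub[OF linear_vee2_2[OF vsA] lin_comp[OF lin_mult2 linear_vee2_1[OF vsA]]] linear_tp1[OF vs_fscale]]
         lin_comp[OF linear_wedge2_2[OF vsk] linear_tp2[OF vs_fscale]]]
    by blast
  have "L (W (G a x) (G b y)) = tp fscale fscale (vee2 sa a b - vee2 sa (a * b) 1) (wedge2 sk x y)" for a b x y
    by (rule antisym_val[OF vs_fscale two L(1)]) (simp_all add: L(2) mult.commute[of b a] vee2_swap[of sa b a] wedge2_swap[of sk y x] tp_minus2)
  then have "\<exists>L. Vector_Spaces.linear fscale fscale L \<and>
     (\<forall>a b x y. L (W (G a x) (G b y)) = tp fscale fscale (vee2 sa a b - vee2 sa (a * b) 1) (wedge2 sk x y))"
    using L(1) by blast
  then show ?thesis unfolding p3_def by (rule someI_ex)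
qed

lemma multA_spec: "Vector_Spaces.linear fscale sa (multA sa) \<and> (\<forall>a b. multA sa (tp sa sa a b) = a * b)"
proof -
  have "\<exists>L. Vector_Spaces.linear fscale sa L \<and> (\<forall>a b. L (tp sa sa a b) = a * b)"
    using tp_ext2[OF vsA vsA vsA lin_mult1 lin_mult2] by blast
  then show ?thesis unfolding multA_def by (rule someI_ex)
qed

lemma embL: "\<exists>L. Vector_Spaces.linear fscale fscale L \<and>
   (\<forall>a b x y. L (tp fscale fscale (tp sa sa a b) (tp sk sk x y)) = W (G a x) (G b y))"
  using tp_ext4[OF vsA vsA vsk vsk vs_fscale,
      OF lin_comp[OF linear_tp1[OF vsA] linear_wedge2_1[OF vs_fscale]]
         lin_comp[OF linear_tp1[OF vsA] linear_wedge2_2[OF vs_fscale]]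
         lin_comp[OF linear_tp2[OF vsk] linear_wedge2_1[OF vs_fscale]]
         lin_comp[OF linear_tp2[OF vsk] linear_wedge2_2[OF vs_fscale]]]
  by blast


lemma emb_spec:
  "(Vector_Spaces.linear fscale fscale (emb1 sa sk) \<and>
     (\<forall>a b x y. emb1 sa sk (tp fscale fscale (wedge2 sa a b) (vee2 sk x y)) =
        fscale (1/2) (W (G a x) (G b y) + W (G a y) (G b x)))) \<and>
   (Vector_Spaces.linear fscale fscale (emb3 sa sk) \<and>
     (\<forall>a b x y. emb3 sa sk (tp fscale fscale (vee2 sa a b) (wedge2 sk x y)) =
        fscale (1/2) (W (G a x) (G b y) - W (G a y) (G b x))))"
proof -
  obtain L where L: "Vector_Spaces.linear fscale fscale L"
   "\<forall>a b x y. L (tp fscale fscale (tp sa sa a b) (tp sk sk x y)) = W (G a x) (G b y)"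
    using embL by blast
  have e1: "L (tp fscale fscale (wedge2 sa a b) (vee2 sk x y)) =
        fscale (1/2) (W (G a x) (G b y) + W (G a y) (G b x))" for a b x y
    using nz by (simp add: wedge2_def vee2_def tp_lin lin_add[OF L(1)] lin_diff[OF L(1)]
        lin_scale[OF L(1)] L(2) fun_eq_iff field_simps)
  have e3: "L (tp fscale fscale (vee2 sa a b) (wedge2 sk x y)) =
        fscale (1/2) (W (G a x) (G b y) - W (G a y) (G b x))" for a b x y
    using nz by (simp add: wedge2_def vee2_def tp_lin lin_add[OF L(1)] lin_diff[OF L(1)]
        lin_scale[OF L(1)] L(2) fun_eq_iff field_simps)
  have "Vector_Spaces.linear fscale fscale (emb1 sa sk) \<and>
     (\<forall>a b x y. emb1 sa sk (tp fscale fscale (wedge2 sa a b) (vee2 sk x y)) =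
        fscale (1/2) (W (G a x) (G b y) + W (G a y) (G b x)))"
    unfolding emb1_def by (rule someI[of _ L]) (use L(1) e1 in blast)
  moreover have "Vector_Spaces.linear fscale fscale (emb3 sa sk) \<and>
     (\<forall>a b x y. emb3 sa sk (tp fscale fscale (vee2 sa a b) (wedge2 sk x y)) =
        fscale (1/2) (W (G a x) (G b y) - W (G a y) (G b x)))"
    unfolding emb3_def by (rule someI[of _ L]) (use L(1) e3 in blast)
  ultimately show ?thesis by blast
qed

end

context L23
begin

definition E1 where "E1 a b x y = fscale (1/2::'f) (W (G a x) (G b y) + W (G a y) (G b x))"
definition E3 where "E3 a b x y = fscale (1/2::'f) (W (G a x) (G b y) - W (G a y) (G b x))"
definition E3' where "E3' a b x y = E3 a b x y - E3 (a * b) 1 x y"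
definition Cg where "Cg a b x y z = E1 a b (br z x) y + E1 a b x (br z y)"
definition dl where "dl a x b y c z = W (G (a * b) (br x y)) (G c z) + W (G (b * c) (br y z)) (G a x)
   + W (G (c * a) (br z x)) (G b y)"

lemmas ptw = E1_def E3_def E3'_def Cg_def dl_def wedge2_def vee2_def tp_lin fun_eq_iff

lemma I1: "Cg a b x y z = fscale (1/2) (dl 1 z a x b y + dl 1 z a y b x)"
  using nz by (simp add: ptw br_anti[of z y] br_anti[of z x] br_anti[of x y] field_simps mult_ac)


lemma I3: "E3' a b (br y z) x + E3' a b (br z x) y =
   dl a x b y 1 z - dl (a * b) x 1 y 1 z - Cg b a z x y + Cg a b y z x - Cg (a * b) 1 z x y - Cg (a * b) 1 y z x"
  using nz by (simp add: ptw br_anti[of z y] br_anti[of z x] br_anti[of x y] field_simps mult_ac)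


lemma I2: "E1 (a * b) c x (br y z) + E1 (b * c) a x (br y z) + E1 (c * a) b x (br y z) - E1 (a * b * c) 1 x (br y z)
  = dl a y b z c x - dl (a * b * c) y 1 z 1 x
    - (Cg (b * c) a x y z - Cg (c * a) b z x y + Cg (a * b * c) 1 x y z + Cg (a * b * c) 1 z x y)
    - (E3' (a * b) c (br y z) x + E3' (b * c) a (br z x) y + E3' (c * a) b (br x y) z)"
  using nz [[simp_depth_limit=1000]] by (simp add: ptw br_anti[of z y] br_anti[of z x] br_anti[of x y] field_simps mult_ac)


abbreviation B2G where "B2G \<equiv> B2g sa sk br"

lemma B2G_eq: "B2G = Dg ` Lam3 fscale (gsp sa sk)"
  by (simp add: B2g_def B2_def)

lemma B2G_sub: "fsub B2G"
  unfolding B2G_eq Lam3_def fspan_def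
  by (rule lin_image_sub[OF Dg_lin module.subspace_span[OF mod_fscale]])

lemma dl_mem: "dl a x b y c z \<in> B2G"
proof -
  have "Dg (wedge3 fscale (G a x) (G b y) (G c z)) = dl a x b y c z"
    by (simp add: Dg_wedge3 G_gsp Bg_G dl_def)
  moreover have "wedge3 fscale (G a x) (G b y) (G c z) \<in> Lam3 fscale (gsp sa sk)"
    unfolding Lam3_def by (rule fspan_base) (use G_gsp in blast)
  ultimately show ?thesis unfolding B2G_eq by (metis image_eqI)
qed

lemma Cg_mem: "Cg a b x y z \<in> B2G"
  unfolding I1 by (intro fsub_scale[OF B2G_sub] fsub_add[OF B2G_sub] dl_mem)

lemma Q_mem: "E3' a b (br y z) x + E3' a b (br z x) y \<in> B2G"
  unfolding I3 by (intro fsub_add[OF B2G_sub] fsub_diff[OF B2G_sub] dl_mem Cg_mem)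

lemma E3'_br: "E3' a b x (br y z) = fscale (- 1/2) (
   (E3' a b (br y z) x + E3' a b (br z x) y) + (E3' a b (br x y) z + E3' a b (br y z) x)
   - (E3' a b (br z x) y + E3' a b (br x y) z))"
  using nz by (simp add: ptw field_simps)

lemma E3'_mem: "E3' a b x (br y z) \<in> B2G"
  unfolding E3'_br by (intro fsub_scale[OF B2G_sub] fsub_add[OF B2G_sub] fsub_diff[OF B2G_sub] Q_mem)

lemma E3'_swap: "E3' a b (br y z) x = - E3' a b x (br y z)"
  using nz by (simp add: ptw field_simps)

lemma E3'_mem2: "E3' a b (br y z) x \<in> B2G"
  unfolding E3'_swap by (intro fsub_neg[OF B2G_sub] E3'_mem)

lemma T0_mem: "E1 (a * b) c x (br y z) + E1 (b * c) a x (br y z) + E1 (c * a) b x (br y z) - E1 (a * b * c) 1 x (br y z) \<in> B2G"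
  unfolding I2 by (intro fsub_add[OF B2G_sub] fsub_diff[OF B2G_sub] dl_mem Cg_mem E3'_mem2)


lemma lin_fspan_into:
  assumes L: "Vector_Spaces.linear fscale fscale L" and S: "fsub S"
    and g: "\<And>g. g \<in> Gs \<Longrightarrow> L g \<in> S" and t: "t \<in> fspan Gs"
  shows "L t \<in> S"
proof -
  have "fspan Gs \<subseteq> {t. L t \<in> S}"
    by (rule fspan_sub[OF lin_preimage_sub[OF L S]]) (use g in blast)
  then show ?thesis using t by blast
qed

lemma img_B2G:
  assumes PL: "Vector_Spaces.linear fscale fscale P" and S: "fsub S"
    and dl: "\<And>a x b y c z. P (dl a x b y c z) \<in> S"
  shows "P ` B2G \<subseteq> S"
proof (rule subsetI)
  fix t assume "t \<in> P ` B2G"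
  then obtain t0 where t: "t = P (Dg t0)" "t0 \<in> Lam3 fscale (gsp sa sk)" unfolding B2G_eq by blast
  let ?f = "\<lambda>u v w. P (W (Bg u v) w + W (Bg v w) u + W (Bg w u) v)"
  have l1: "Vector_Spaces.linear fscale fscale (\<lambda>u. ?f u v w)" for v w
    by (rule lin_comp[OF lin_plus[OF lin_plus[OF lin_comp[OF Bg_lin1 linear_wedge2_1[OF vs_fscale]]
          linear_wedge2_2[OF vs_fscale]] lin_comp[OF Bg_lin2 linear_wedge2_1[OF vs_fscale]]] PL])
  have l2: "Vector_Spaces.linear fscale fscale (\<lambda>v. ?f u v w)" for u w
    by (rule lin_comp[OF lin_plus[OF lin_plus[OF lin_comp[OF Bg_lin2 linear_wedge2_1[OF vs_fscale]]
          lin_comp[OF Bg_lin1 linear_wedge2_1[OF vs_fscale]]] linear_wedge2_2[OF vs_fscale]] PL])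
  have l3: "Vector_Spaces.linear fscale fscale (\<lambda>w. ?f u v w)" for u v
    by (rule lin_comp[OF lin_plus[OF lin_plus[OF linear_wedge2_2[OF vs_fscale]
          lin_comp[OF Bg_lin2 linear_wedge2_1[OF vs_fscale]]] lin_comp[OF Bg_lin1 linear_wedge2_1[OF vs_fscale]]] PL])
  have gen: "?f u v w \<in> S" if "u \<in> gsp sa sk" "v \<in> gsp sa sk" "w \<in> gsp sa sk" for u v w
  proof (rule trilin_span[where f="?f", OF l1 l2 l3 S])
    show "?f a b c \<in> S" if "a \<in> {G a x | a x. True}" "b \<in> {G a x | a x. True}" "c \<in> {G a x | a x. True}" for a b c
      using that dl by (auto simp: Bg_G dl_def)
  qed (use that in \<open>simp_all add: gsp_eq fspan_def\<close>)
  have "P (Dg t0) \<in> S"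
  proof (rule lin_fspan_into[OF lin_comp[OF Dg_lin PL] S])
    show "t0 \<in> fspan {wedge3 fscale u v w | u v w. u \<in> gsp sa sk \<and> v \<in> gsp sa sk \<and> w \<in> gsp sa sk}"
      using t(2) by (simp add: Lam3_def)
    fix g assume "g \<in> {wedge3 fscale u v w | u v w. u \<in> gsp sa sk \<and> v \<in> gsp sa sk \<and> w \<in> gsp sa sk}"
    then obtain u v w where "g = wedge3 fscale u v w" "u \<in> gsp sa sk" "v \<in> gsp sa sk" "w \<in> gsp sa sk" by blast
    then show "P (Dg g) \<in> S" using gen Dg_wedge3 by simp
  qed
  then show "t \<in> S" using t by simp
qed

lemma emb1_lin: "Vector_Spaces.linear fscale fscale (emb1 sa sk)" using emb_spec by blast
lemma emb3_lin: "Vector_Spaces.linear fscale fscale (emb3 sa sk)" using emb_spec by blast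
lemma emb1_val: "emb1 sa sk (tp fscale fscale (wedge2 sa a b) (vee2 sk x y)) = E1 a b x y"
  using emb_spec unfolding E1_def by blast
lemma emb3_val: "emb3 sa sk (tp fscale fscale (vee2 sa a b) (wedge2 sk x y)) = E3 a b x y"
  using emb_spec unfolding E3_def by blast

lemma kveek'_sub: "kveek' sk br \<subseteq> fspan {vee2 sk x (br y z) | x y z. True}"
  unfolding kveek'_def
proof (rule fspan_sub[OF fsub_fspan], rule subsetI)
  fix t assume "t \<in> {vee2 sk x y |x y. y \<in> kder sk br}"
  then obtain x y where t: "t = vee2 sk x y" "y \<in> kder sk br" by blast
  have "vee2 sk x y \<in> fspan (vee2 sk x ` {br x y |x y. True})"
    using lin_span_mem[OF linear_vee2_2[OF vsk], of y] t(2) by (simp add: kder_def fspan_def)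
  also have "\<dots> \<subseteq> fspan {vee2 sk x (br y z) | x y z. True}" by (rule fspan_mono) blast
  finally show "t \<in> fspan {vee2 sk x (br y z) | x y z. True}" using t by simp
qed

lemma kwedgek'_sub: "kwedgek' sk br \<subseteq> fspan {wedge2 sk x (br y z) | x y z. True}"
  unfolding kwedgek'_def
proof (rule fspan_sub[OF fsub_fspan], rule subsetI)
  fix t assume "t \<in> {wedge2 sk x y |x y. y \<in> kder sk br}"
  then obtain x y where t: "t = wedge2 sk x y" "y \<in> kder sk br" by blast
  have "wedge2 sk x y \<in> fspan (wedge2 sk x ` {br x y |x y. True})"
    using lin_span_mem[OF linear_wedge2_2[OF vsk], of y] t(2) by (simp add: kder_def fspan_def)
  also have "\<dots> \<subseteq> fspan {wedge2 sk x (br y z) | x y z. True}" by (rule fspan_mono) blast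
  finally show "t \<in> fspan {wedge2 sk x (br y z) | x y z. True}" using t by simp
qed

lemma part1a: "emb1 sa sk ` ssum (tsp fscale fscale (Lam2 sa UNIV) (kS2 sk br))
                       (tsp fscale fscale (T0A sa) (kveek' sk br)) \<subseteq> B2G"
proof -
  have A: "emb1 sa sk u \<in> B2G" if "u \<in> tsp fscale fscale (Lam2 sa UNIV) (kS2 sk br)" for u
  proof -
    have "u \<in> fspan {tp fscale fscale u v | u v. u \<in> {wedge2 sa a b | a b. a \<in> UNIV \<and> b \<in> UNIV}
       \<and> v \<in> {vee2 sk (br z x) y + vee2 sk x (br z y) | x y z. True}}"
      using tsp_gen[OF vs_fscale vs_fscale, of "Lam2 sa UNIV" "{wedge2 sa a b | a b. a \<in> UNIV \<and> b \<in> UNIV}"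
        "kS2 sk br" "{vee2 sk (br z x) y + vee2 sk x (br z y) | x y z. True}"] that
      by (auto simp: Lam2_def kS2_def fspan_def)
    then show ?thesis
    proof (rule lin_fspan_into[OF emb1_lin B2G_sub, rotated])
      fix g assume "g \<in> {tp fscale fscale u v | u v. u \<in> {wedge2 sa a b | a b. a \<in> UNIV \<and> b \<in> UNIV}
       \<and> v \<in> {vee2 sk (br z x) y + vee2 sk x (br z y) | x y z. True}}"
      then obtain a b x y z where g: "g = tp fscale fscale (wedge2 sa a b) (vee2 sk (br z x) y + vee2 sk x (br z y))"
        by blast
      have "emb1 sa sk g = Cg a b x y z"
        unfolding g tp_add2 lin_add[OF emb1_lin] emb1_val Cg_def ..
      then show "emb1 sa sk g \<in> B2G" using Cg_mem by simp
    qed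
  qed
  have B: "emb1 sa sk u \<in> B2G" if "u \<in> tsp fscale fscale (T0A sa) (kveek' sk br)" for u
  proof -
    have "u \<in> fspan {tp fscale fscale u v | u v. u \<in> {wedge2 sa (a * b) c + wedge2 sa (b * c) a + wedge2 sa (c * a) b
                   - wedge2 sa (a * b * c) 1 | a b c. True}
       \<and> v \<in> {vee2 sk x (br y z) | x y z. True}}"
      using tsp_gen[OF vs_fscale vs_fscale, of "T0A sa" "{wedge2 sa (a * b) c + wedge2 sa (b * c) a + wedge2 sa (c * a) b
                   - wedge2 sa (a * b * c) 1 | a b c. True}"
        "kveek' sk br" "{vee2 sk x (br y z) | x y z. True}"] that kveek'_sub
      by (auto simp: T0A_def fspan_def)
    then show ?thesis
    proof (rule lin_fspan_into[OF emb1_lin B2G_sub, rotated])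
      fix g assume "g \<in> {tp fscale fscale u v | u v. u \<in> {wedge2 sa (a * b) c + wedge2 sa (b * c) a + wedge2 sa (c * a) b
                   - wedge2 sa (a * b * c) 1 | a b c. True}
       \<and> v \<in> {vee2 sk x (br y z) | x y z. True}}"
      then obtain a b c x y z where g: "g = tp fscale fscale (wedge2 sa (a * b) c + wedge2 sa (b * c) a + wedge2 sa (c * a) b
                   - wedge2 sa (a * b * c) 1) (vee2 sk x (br y z))"
        by blast
      have "emb1 sa sk g = E1 (a * b) c x (br y z) + E1 (b * c) a x (br y z) + E1 (c * a) b x (br y z) - E1 (a * b * c) 1 x (br y z)"
        unfolding g tp_add1 tp_diff1 lin_add[OF emb1_lin] lin_diff[OF emb1_lin] emb1_val ..
      then show "emb1 sa sk g \<in> B2G" using T0_mem by simp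
    qed
  qed
  show ?thesis
  proof (rule subsetI)
    fix t assume "t \<in> emb1 sa sk ` ssum (tsp fscale fscale (Lam2 sa UNIV) (kS2 sk br))
                       (tsp fscale fscale (T0A sa) (kveek' sk br))"
    then obtain u w where "t = emb1 sa sk (u + w)" "u \<in> tsp fscale fscale (Lam2 sa UNIV) (kS2 sk br)"
      "w \<in> tsp fscale fscale (T0A sa) (kveek' sk br)" unfolding ssum_def by blast
    then show "t \<in> B2G" using A B by (simp add: lin_add[OF emb1_lin] fsub_add[OF B2G_sub])
  qed
qed


lemma mod_sk: "module sk" using vsk module_iff_vector_space by blast

lemma br_kder: "br x y \<in> kder sk br"
  unfolding kder_def by (rule module.span_base[OF mod_sk]) blast

lemma p1_lin: "Vector_Spaces.linear fscale fscale (p1 sa sk)" using p1_spec by blast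
lemma p1_W: "p1 sa sk (W (G a x) (G b y)) = tp fscale fscale (wedge2 sa a b) (vee2 sk x y)"
  using p1_spec by blast

lemma p1_E1: "p1 sa sk (E1 a b x y) = tp fscale fscale (wedge2 sa a b) (vee2 sk x y)"
  unfolding E1_def lin_scale[OF p1_lin] lin_add[OF p1_lin] p1_W vee2_swap[of sk y x]
  using nz by (simp add: fun_eq_iff field_simps)

abbreviation kS2g where "kS2g x y z \<equiv> vee2 sk (br z x) y + vee2 sk x (br z y)"
abbreviation TAg where "TAg a b c \<equiv> wedge2 sa (a * b) c + wedge2 sa (b * c) a + wedge2 sa (c * a) b"

lemma p1_dl: "p1 sa sk (dl a x b y c z) =
   (tp fscale fscale (wedge2 sa (b * c) a) (kS2g z x y) - tp fscale fscale (wedge2 sa (c * a) b) (kS2g y z x))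
   + tp fscale fscale (TAg a b c) (vee2 sk z (br x y))"
  unfolding dl_def lin_add[OF p1_lin] p1_W
  using nz by (simp add: ptw br_anti[of x y] br_anti[of z x] field_simps mult_ac)

lemma part1b_sub: "p1 sa sk ` B2G \<subseteq> ssum (tsp fscale fscale (Lam2 sa UNIV) (kS2 sk br))
               (tsp fscale fscale (TA sa) (kveek' sk br))"
proof (rule img_B2G[OF p1_lin ssum_sub[OF fsub_tsp fsub_tsp]])
  fix a x b y c z
  have l: "wedge2 sa u v \<in> Lam2 sa UNIV" for u v unfolding Lam2_def by (rule fspan_base) blast
  have k: "kS2g x y z \<in> kS2 sk br" for x y z unfolding kS2_def by (rule fspan_base) blast
  have t: "TAg a b c \<in> TA sa" unfolding TA_def by (rule fspan_base) blast
  have v: "vee2 sk z (br x y) \<in> kveek' sk br" unfolding kveek'_def by (rule fspan_base) (use br_kder in blast)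
  show "p1 sa sk (dl a x b y c z) \<in> ssum (tsp fscale fscale (Lam2 sa UNIV) (kS2 sk br))
               (tsp fscale fscale (TA sa) (kveek' sk br))"
    unfolding p1_dl
    by (intro ssum_mem fsub_diff[OF fsub_tsp] tsp_base l k t v)
qed

lemma P1_sub: "fsub (p1 sa sk ` B2G)" by (rule lin_image_sub[OF p1_lin B2G_sub])

lemma p1_Cg: "p1 sa sk (Cg a b x y z) = tp fscale fscale (wedge2 sa a b) (kS2g x y z)"
  unfolding Cg_def lin_add[OF p1_lin] p1_E1 tp_add2 ..

lemma p1_TA: "tp fscale fscale (TAg a b c) (vee2 sk x (br y z)) = p1 sa sk (
   (E1 (a * b) c x (br y z) + E1 (b * c) a x (br y z) + E1 (c * a) b x (br y z) - E1 (a * b * c) 1 x (br y z))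
   + dl (a * b * c) y 1 z 1 x + Cg (a * b * c) 1 x y z + Cg (a * b * c) 1 z x y)"
  unfolding lin_add[OF p1_lin] lin_diff[OF p1_lin] p1_E1 p1_Cg dl_def p1_W
  using nz by (simp add: ptw br_anti[of z y] br_anti[of z x] br_anti[of x y] field_simps mult_ac)

lemma part1b_sup: "ssum (tsp fscale fscale (Lam2 sa UNIV) (kS2 sk br))
               (tsp fscale fscale (TA sa) (kveek' sk br)) \<subseteq> p1 sa sk ` B2G"
proof -
  have A: "u \<in> p1 sa sk ` B2G" if "u \<in> tsp fscale fscale (Lam2 sa UNIV) (kS2 sk br)" for u
  proof -
    have "u \<in> fspan {tp fscale fscale u v | u v. u \<in> {wedge2 sa a b | a b. a \<in> UNIV \<and> b \<in> UNIV}
       \<and> v \<in> {vee2 sk (br z x) y + vee2 sk x (br z y) | x y z. True}}"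
      using tsp_gen[OF vs_fscale vs_fscale, of "Lam2 sa UNIV" "{wedge2 sa a b | a b. a \<in> UNIV \<and> b \<in> UNIV}"
        "kS2 sk br" "{vee2 sk (br z x) y + vee2 sk x (br z y) | x y z. True}"] that
      by (auto simp: Lam2_def kS2_def fspan_def)
    moreover have "fspan {tp fscale fscale u v | u v. u \<in> {wedge2 sa a b | a b. a \<in> UNIV \<and> b \<in> UNIV}
       \<and> v \<in> {vee2 sk (br z x) y + vee2 sk x (br z y) | x y z. True}} \<subseteq> p1 sa sk ` B2G"
    proof (rule fspan_sub[OF P1_sub], rule subsetI)
      fix g assume "g \<in> {tp fscale fscale u v | u v. u \<in> {wedge2 sa a b | a b. a \<in> UNIV \<and> b \<in> UNIV}
       \<and> v \<in> {vee2 sk (br z x) y + vee2 sk x (br z y) | x y z. True}}"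
      then obtain a b x y z where g: "g = tp fscale fscale (wedge2 sa a b) (kS2g x y z)" by blast
      show "g \<in> p1 sa sk ` B2G" unfolding g p1_Cg[symmetric] by (rule imageI[OF Cg_mem])
    qed
    ultimately show ?thesis by blast
  qed
  have B: "u \<in> p1 sa sk ` B2G" if "u \<in> tsp fscale fscale (TA sa) (kveek' sk br)" for u
  proof -
    have "u \<in> fspan {tp fscale fscale u v | u v. u \<in> {wedge2 sa (a * b) c + wedge2 sa (b * c) a + wedge2 sa (c * a) b | a b c. True}
       \<and> v \<in> {vee2 sk x (br y z) | x y z. True}}"
      using tsp_gen[OF vs_fscale vs_fscale, of "TA sa" "{wedge2 sa (a * b) c + wedge2 sa (b * c) a + wedge2 sa (c * a) b | a b c. True}"
        "kveek' sk br" "{vee2 sk x (br y z) | x y z. True}"] that kveek'_sub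
      by (auto simp: TA_def fspan_def)
    moreover have "fspan {tp fscale fscale u v | u v. u \<in> {wedge2 sa (a * b) c + wedge2 sa (b * c) a + wedge2 sa (c * a) b | a b c. True}
       \<and> v \<in> {vee2 sk x (br y z) | x y z. True}} \<subseteq> p1 sa sk ` B2G"
    proof (rule fspan_sub[OF P1_sub], rule subsetI)
      fix g assume "g \<in> {tp fscale fscale u v | u v. u \<in> {wedge2 sa (a * b) c + wedge2 sa (b * c) a + wedge2 sa (c * a) b | a b c. True}
       \<and> v \<in> {vee2 sk x (br y z) | x y z. True}}"
      then obtain a b c x y z where g: "g = tp fscale fscale (TAg a b c) (vee2 sk x (br y z))" by blast
      show "g \<in> p1 sa sk ` B2G" unfolding g p1_TA
        by (intro imageI fsub_add[OF B2G_sub] T0_mem dl_mem Cg_mem)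
    qed
    ultimately show ?thesis by blast
  qed
  show ?thesis
  proof (rule subsetI)
    fix t assume "t \<in> ssum (tsp fscale fscale (Lam2 sa UNIV) (kS2 sk br))
               (tsp fscale fscale (TA sa) (kveek' sk br))"
    then obtain u w where "t = u + w" "u \<in> tsp fscale fscale (Lam2 sa UNIV) (kS2 sk br)"
      "w \<in> tsp fscale fscale (TA sa) (kveek' sk br)" unfolding ssum_def by blast
    then show "t \<in> p1 sa sk ` B2G" using A B fsub_add[OF P1_sub] by simp
  qed
qed


lemma mod_sa: "module sa" using vsA module_iff_vector_space by blast

lemma p2_lin: "Vector_Spaces.linear fscale fscale (p2 sa sk)" using p2_spec by blast
lemma p2_W: "p2 sa sk (W (G a x) (G b y)) = tp sa fscale (a * b) (wedge2 sk x y)"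
  using p2_spec by blast

lemma p2_dl: "p2 sa sk (dl a x b y c z) = tp sa fscale (a * b * c) (Dk (wedge3 sk x y z))"
  unfolding dl_def lin_add[OF p2_lin] p2_W Dk_wedge3 tp_add2 by (simp add: mult_ac)

lemma Dk_B2: "Dk (wedge3 sk x y z) \<in> B2 sk br UNIV"
  unfolding B2_def Lam3_def by (rule imageI, rule fspan_base) blast

lemma part2_sub: "p2 sa sk ` B2G \<subseteq> tsp sa fscale UNIV (B2 sk br UNIV)"
  by (rule img_B2G[OF p2_lin fsub_tsp]) (unfold p2_dl, rule tsp_base[OF UNIV_I Dk_B2])

lemma part2_sup: "tsp sa fscale UNIV (B2 sk br UNIV) \<subseteq> p2 sa sk ` B2G"
proof -
  let ?V0 = "Dk ` {wedge3 sk u v w | u v w. u \<in> UNIV \<and> v \<in> UNIV \<and> w \<in> UNIV}"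
  have V: "B2 sk br UNIV \<subseteq> module.span fscale ?V0"
    unfolding B2_def Lam3_def fspan_def lin_image_span[OF Dk_lin] ..
  have U: "UNIV \<subseteq> module.span sa UNIV" using module.span_superset[OF mod_sa] .
  have "fspan {tp sa fscale u v | u v. u \<in> UNIV \<and> v \<in> ?V0} \<subseteq> p2 sa sk ` B2G"
  proof (rule fspan_sub[OF lin_image_sub[OF p2_lin B2G_sub]], rule subsetI)
    fix g assume "g \<in> {tp sa fscale u v | u v. u \<in> UNIV \<and> v \<in> ?V0}"
    then obtain a x y z where g: "g = tp sa fscale a (Dk (wedge3 sk x y z))" by blast
    have "g = p2 sa sk (dl a x 1 y 1 z)" unfolding g p2_dl by simp
    then show "g \<in> p2 sa sk ` B2G" using dl_mem by blast
  qed
  then show ?thesis using tsp_gen[OF vsA vs_fscale U V] by blast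
qed

lemma multA_lin: "Vector_Spaces.linear fscale sa (multA sa)" using multA_spec by blast
lemma multA_tp: "multA sa (tp sa sa a b) = a * b" using multA_spec by blast

lemma multA_vee: "multA sa (vee2 sa a b) = a * b"
proof -
  interpret vA: vector_space sa by (rule vsA)
  have "multA sa (vee2 sa a b) = sa (1/2) (a * b + a * b)"
    unfolding vee2_def lin_scale[OF multA_lin] lin_add[OF multA_lin] multA_tp by (simp add: mult.commute)
  also have "a * b + a * b = sa 2 (a * b)" using vA.scale_left_distrib[of 1 1 "a * b"] by simp
  also have "sa (1/2) (sa 2 (a * b)) = a * b" using two by simp
  finally show ?thesis .
qed

abbreviation qA where "qA a b \<equiv> vee2 sa a b - vee2 sa (a * b) 1"

lemma IA_gen: "qA a b \<in> IA sa"
proof -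
  have "qA a b \<in> Sym2 sa UNIV"
    unfolding Sym2_def by (intro fsub_diff[OF fsub_fspan] fspan_base) blast+
  moreover have "multA sa (qA a b) = 0"
    unfolding lin_diff[OF multA_lin] multA_vee by simp
  ultimately show ?thesis unfolding IA_def by blast
qed

lemma IA_sub: "IA sa \<subseteq> fspan {qA a b | a b. True}"
proof
  fix t assume t: "t \<in> IA sa"
  let ?F = "\<lambda>t. t - vee2 sa (multA sa t) 1"
  have FL: "Vector_Spaces.linear fscale fscale ?F"
    by (rule lin_sub[OF lin_id[OF vs_fscale] lin_comp[OF multA_lin linear_vee2_1[OF vsA]]])
  have "?F t \<in> fspan {qA a b | a b. True}"
  proof (rule lin_fspan_into[OF FL fsub_fspan])
    show "t \<in> fspan {vee2 sa u v | u v. u \<in> UNIV \<and> v \<in> UNIV}" using t by (simp add: IA_def Sym2_def)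
    fix g assume "g \<in> {vee2 sa u v | u v. u \<in> UNIV \<and> v \<in> UNIV}"
    then obtain u v where g: "g = vee2 sa u v" by blast
    show "?F g \<in> fspan {qA a b | a b. True}" unfolding g multA_vee by (rule fspan_base) blast
  qed
  then show "t \<in> fspan {qA a b | a b. True}" using t by (simp add: IA_def vee2_zero1)
qed

lemma p3_lin: "Vector_Spaces.linear fscale fscale (p3 sa sk)" using p3_spec by blast
lemma p3_W: "p3 sa sk (W (G a x) (G b y)) = tp fscale fscale (qA a b) (wedge2 sk x y)"
  using p3_spec by blast

lemma gen3: "tp fscale fscale (qA a b) (wedge2 sk (br p r) t) \<in> tsp fscale fscale (IA sa) (kwedgek' sk br)"
proof -
  have "wedge2 sk t (br p r) \<in> kwedgek' sk br" unfolding kwedgek'_def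
    by (rule fspan_base) (use br_kder in blast)
  then show ?thesis unfolding wedge2_swap[of sk "br p r" t] tp_minus2
    by (intro fsub_neg[OF fsub_tsp] tsp_base IA_gen)
qed

lemma part3_sub: "p3 sa sk ` B2G \<subseteq> tsp fscale fscale (IA sa) (kwedgek' sk br)"
  by (rule img_B2G[OF p3_lin fsub_tsp])
     (unfold dl_def lin_add[OF p3_lin] p3_W, intro fsub_add[OF fsub_tsp] gen3)

lemma p3_E3': "p3 sa sk (E3' a b x y) = tp fscale fscale (qA a b) (wedge2 sk x y)"
  unfolding E3'_def E3_def lin_diff[OF p3_lin] lin_scale[OF p3_lin] p3_W
  using nz by (simp add: wedge2_def vee2_def tp_lin fun_eq_iff field_simps mult_ac)

lemma tspIA_sub: "tsp fscale fscale (IA sa) (kwedgek' sk br) \<subseteq>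
   fspan {tp fscale fscale u v | u v. u \<in> {qA a b | a b. True} \<and> v \<in> {wedge2 sk x (br y z) | x y z. True}}"
  by (rule tsp_gen[OF vs_fscale vs_fscale]) (use IA_sub kwedgek'_sub in \<open>simp_all add: fspan_def\<close>)

lemma part3_sup: "tsp fscale fscale (IA sa) (kwedgek' sk br) \<subseteq> p3 sa sk ` B2G"
proof -
  have "fspan {tp fscale fscale u v | u v. u \<in> {qA a b | a b. True} \<and> v \<in> {wedge2 sk x (br y z) | x y z. True}}
     \<subseteq> p3 sa sk ` B2G"
  proof (rule fspan_sub[OF lin_image_sub[OF p3_lin B2G_sub]], rule subsetI)
    fix g assume "g \<in> {tp fscale fscale u v | u v. u \<in> {qA a b | a b. True} \<and> v \<in> {wedge2 sk x (br y z) | x y z. True}}"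
    then obtain a b x y z where g: "g = tp fscale fscale (qA a b) (wedge2 sk x (br y z))" by blast
    show "g \<in> p3 sa sk ` B2G" unfolding g p3_E3'[symmetric] by (rule imageI[OF E3'_mem])
  qed
  then show ?thesis using tspIA_sub by blast
qed

lemma part3_emb: "emb3 sa sk ` tsp fscale fscale (IA sa) (kwedgek' sk br) \<subseteq> B2G"
proof -
  have "emb3 sa sk ` fspan {tp fscale fscale u v | u v. u \<in> {qA a b | a b. True} \<and> v \<in> {wedge2 sk x (br y z) | x y z. True}}
     \<subseteq> B2G"
  proof (rule subsetI)
    fix t assume "t \<in> emb3 sa sk ` fspan {tp fscale fscale u v | u v. u \<in> {qA a b | a b. True} \<and> v \<in> {wedge2 sk x (br y z) | x y z. True}}"
    then obtain t0 where t: "t = emb3 sa sk t0"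
      "t0 \<in> fspan {tp fscale fscale u v | u v. u \<in> {qA a b | a b. True} \<and> v \<in> {wedge2 sk x (br y z) | x y z. True}}"
      by blast
    show "t \<in> B2G" unfolding t(1)
    proof (rule lin_fspan_into[OF emb3_lin B2G_sub _ t(2)])
      fix g assume "g \<in> {tp fscale fscale u v | u v. u \<in> {qA a b | a b. True} \<and> v \<in> {wedge2 sk x (br y z) | x y z. True}}"
      then obtain a b x y z where g: "g = tp fscale fscale (qA a b) (wedge2 sk x (br y z))" by blast
      have "emb3 sa sk g = E3' a b x (br y z)"
        unfolding g tp_diff1 lin_diff[OF emb3_lin] emb3_val E3'_def ..
      then show "emb3 sa sk g \<in> B2G" using E3'_mem by simp
    qed
  qed
  then show ?thesis using tspIA_sub by blast
qed

lemma main: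
  "emb1 sa sk ` ssum (tsp fscale fscale (Lam2 sa UNIV) (kS2 sk br))
                       (tsp fscale fscale (T0A sa) (kveek' sk br))
        \<subseteq> B2g sa sk br
     \<and> p1 sa sk ` B2g sa sk br
        = ssum (tsp fscale fscale (Lam2 sa UNIV) (kS2 sk br))
               (tsp fscale fscale (TA sa) (kveek' sk br))
     \<and> p2 sa sk ` B2g sa sk br = tsp sa fscale UNIV (B2 sk br UNIV)
     \<and> tsp fscale fscale (IA sa) (kwedgek' sk br) = p3 sa sk ` B2g sa sk br
     \<and> emb3 sa sk ` tsp fscale fscale (IA sa) (kwedgek' sk br) \<subseteq> B2g sa sk br"
  using part1a part1b_sub part1b_sup part2_sub part2_sup part3_sub part3_sup part3_emb
  by blast

end

theorem lemma2p3:
  fixes sa :: "'f::field \<Rightarrow> 'a::comm_ring_1 \<Rightarrow> 'a"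
    and sk :: "'f \<Rightarrow> 'k::ab_group_add \<Rightarrow> 'k"
    and br :: "'k \<Rightarrow> 'k \<Rightarrow> 'k"
  assumes two: "(2::'f) \<noteq> 0"
    and vsA: "Vector_Spaces.vector_space sa"
    and algA: "\<And>c a b. sa c (a * b) = sa c a * b"
    and vsk: "Vector_Spaces.vector_space sk"
    and br_lin1: "\<And>y. Vector_Spaces.linear sk sk (\<lambda>x. br x y)"
    and br_lin2: "\<And>x. Vector_Spaces.linear sk sk (br x)"
    and br_alt: "\<And>x. br x x = 0"
    and jacobi: "\<And>x y z. br x (br y z) + br y (br z x) + br z (br x y) = 0"
  shows
    "emb1 sa sk ` ssum (tsp fscale fscale (Lam2 sa UNIV) (kS2 sk br))
                       (tsp fscale fscale (T0A sa) (kveek' sk br))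
        \<subseteq> B2g sa sk br
     \<and> p1 sa sk ` B2g sa sk br
        = ssum (tsp fscale fscale (Lam2 sa UNIV) (kS2 sk br))
               (tsp fscale fscale (TA sa) (kveek' sk br))
     \<and> p2 sa sk ` B2g sa sk br = tsp sa fscale UNIV (B2 sk br UNIV)
     \<and> tsp fscale fscale (IA sa) (kwedgek' sk br) = p3 sa sk ` B2g sa sk br
     \<and> emb3 sa sk ` tsp fscale fscale (IA sa) (kwedgek' sk br) \<subseteq> B2g sa sk br"
proof -
  interpret L23 sa sk br
    by (rule L23.intro) (fact two vsA algA vsk br_lin1 br_lin2 br_alt jacobi)+
  show ?thesis by (rule main)
qed

end
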